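(* Let $G$ be a decomposable (chordal) undirected graph on $\{1,\dots,d\}$ whose largest clique has size three, and consider the palindromic Ising model with concentration graph $G$: the set of positive distributions $p$ on $\{0,1\}^d$ that are palindromic, have log-linear interactions $\lambda_b=0$ for all $|b|\ge3$, and have $\lambda_{\{i,j\}}=0$ whenever $\{i,j\}$ is not an edge of $G$. Given a random sample of size $n$ with cell counts $n(a)$, $a\in\{0,1\}^d$, the maximum likelihood estimate of $p$ in this model is obtained in closed form from the marginal correlations of the symmetrized $2\times 2$ tables of the pairs of variables within the 2-node and 3-node cliques of $G$, namely from the cross-sum differences $\hat\xi_{st}=\frac1n\sum_{a}(-1)^{a_s+a_t}n(a)$ for pairs $\{s,t\}$ contained in a clique of $G$.
   Context: Palindromic: $p(a)=p(\sim a)$ for all $a$, where $\sim a$ is the complement of the binary vector $a$. Log-linear interactions: $\lambda_b=2^{-d}\sum_a(-1)^{a\cdot b}\log p(a)$, $|b|=\sum_vb_v$. A clique is a maximal complete subset of nodes. The symmetrized counts are $\hat n(a)=\{n(a)+n(\sim a)\}/2$; the correlation of the $\pm1$-coded variables $(-1)^{A_s},(-1)^{A_t}$ in the symmetrized $2\times2$ marginal table of $(A_s,A_t)$ equals $\hat\xi_{st}$. *)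

theory Defs
  imports Complex_Main "HOL-Library.FuncSet"
begin

text \<open>Nodes are 0,...,d-1; a configuration a in {0,1}^d is an extensional function on {0..<d}.\<close>

definition cfgs :: "nat \<Rightarrow> (nat \<Rightarrow> nat) set" where
  "cfgs d = {0..<d} \<rightarrow>\<^sub>E {0, 1}"

definition compl_cfg :: "nat \<Rightarrow> (nat \<Rightarrow> nat) \<Rightarrow> (nat \<Rightarrow> nat)" where
  "compl_cfg d a = (\<lambda>i\<in>{0..<d}. 1 - a i)"

definition dotp :: "nat \<Rightarrow> (nat \<Rightarrow> nat) \<Rightarrow> (nat \<Rightarrow> nat) \<Rightarrow> nat" where
  "dotp d a b = (\<Sum>i<d. a i * b i)"

definition wt :: "nat \<Rightarrow> (nat \<Rightarrow> nat) \<Rightarrow> nat" where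
  "wt d b = (\<Sum>i<d. b i)"

definition loglin_int :: "nat \<Rightarrow> ((nat \<Rightarrow> nat) \<Rightarrow> real) \<Rightarrow> (nat \<Rightarrow> nat) \<Rightarrow> real" where
  "loglin_int d p b = (1 / 2 ^ d) * (\<Sum>a\<in>cfgs d. (-1::real) ^ (dotp d a b) * ln (p a))"

definition pair_vec :: "nat \<Rightarrow> nat \<Rightarrow> nat \<Rightarrow> (nat \<Rightarrow> nat)" where
  "pair_vec d s t = (\<lambda>i\<in>{0..<d}. if i = s \<or> i = t then 1 else 0)"

definition palindromic_ising :: "nat \<Rightarrow> nat set set \<Rightarrow> ((nat \<Rightarrow> nat) \<Rightarrow> real) set" where
  "palindromic_ising d E = {p.
     (\<forall>a\<in>cfgs d. 0 < p a) \<and> (\<Sum>a\<in>cfgs d. p a) = 1 \<and>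
     (\<forall>a\<in>cfgs d. p (compl_cfg d a) = p a) \<and>
     (\<forall>b\<in>cfgs d. 3 \<le> wt d b \<longrightarrow> loglin_int d p b = 0) \<and>
     (\<forall>s<d. \<forall>t<d. s \<noteq> t \<and> {s, t} \<notin> E \<longrightarrow> loglin_int d p (pair_vec d s t) = 0)}"

definition is_graph :: "nat \<Rightarrow> nat set set \<Rightarrow> bool" where
  "is_graph d E = (\<forall>e\<in>E. \<exists>s t. s \<noteq> t \<and> s < d \<and> t < d \<and> e = {s, t})"

definition complete_set :: "nat \<Rightarrow> nat set set \<Rightarrow> nat set \<Rightarrow> bool" where
  "complete_set d E K = (K \<subseteq> {0..<d} \<and> (\<forall>s\<in>K. \<forall>t\<in>K. s \<noteq> t \<longrightarrow> {s, t} \<in> E))"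

definition is_clique :: "nat \<Rightarrow> nat set set \<Rightarrow> nat set \<Rightarrow> bool" where
  "is_clique d E C = (complete_set d E C \<and> (\<forall>K. complete_set d E K \<and> C \<subseteq> K \<longrightarrow> K = C))"

text \<open>A perfect sequence (running intersection ordering) of all cliques; such a
  sequence exists iff the graph is decomposable.\<close>
definition perfect_clique_seq :: "nat \<Rightarrow> nat set set \<Rightarrow> nat set list \<Rightarrow> bool" where
  "perfect_clique_seq d E cs = (distinct cs \<and> set cs = {C. is_clique d E C} \<and>
     (\<forall>j. 0 < j \<and> j < length cs \<longrightarrow> (\<exists>i<j. cs ! j \<inter> \<Union>(set (take j cs)) \<subseteq> cs ! i)))"

definition sample_size :: "nat \<Rightarrow> ((nat \<Rightarrow> nat) \<Rightarrow> nat) \<Rightarrow> nat" where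
  "sample_size d n = (\<Sum>a\<in>cfgs d. n a)"

definition xi_hat :: "nat \<Rightarrow> ((nat \<Rightarrow> nat) \<Rightarrow> nat) \<Rightarrow> nat \<Rightarrow> nat \<Rightarrow> real" where
  "xi_hat d n s t = (\<Sum>a\<in>cfgs d. (-1::real) ^ (a s + a t) * real (n a)) / real (sample_size d n)"

text \<open>Closed-form symmetrized marginal on a set K of at most three nodes, in terms of xi:
  2^(-|K|) (1 + sum_{s<t in K} (-1)^(a_s+a_t) xi_st).\<close>
definition sym_marg_hat :: "nat \<Rightarrow> ((nat \<Rightarrow> nat) \<Rightarrow> nat) \<Rightarrow> nat set \<Rightarrow> (nat \<Rightarrow> nat) \<Rightarrow> real" where
  "sym_marg_hat d n K a =
     (1 + (\<Sum>s\<in>K. \<Sum>t\<in>K. if s < t then (-1::real) ^ (a s + a t) * xi_hat d n s t else 0))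
     / 2 ^ card K"

definition mle_formula :: "nat \<Rightarrow> ((nat \<Rightarrow> nat) \<Rightarrow> nat) \<Rightarrow> nat set list \<Rightarrow> (nat \<Rightarrow> nat) \<Rightarrow> real" where
  "mle_formula d n cs a =
     (\<Prod>j<length cs. sym_marg_hat d n (cs ! j) a
                     / sym_marg_hat d n (cs ! j \<inter> \<Union>(set (take j cs))) a)"

definition loglik :: "nat \<Rightarrow> ((nat \<Rightarrow> nat) \<Rightarrow> nat) \<Rightarrow> ((nat \<Rightarrow> nat) \<Rightarrow> real) \<Rightarrow> real" where
  "loglik d n p = (\<Sum>a\<in>cfgs d. real (n a) * ln (p a))"

end

theory Submission
  imports Defs
begin


lemma cfgs_fin: "finite (cfgs d)"
  unfolding cfgs_def by (simp add: finite_PiE)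

lemma cfgs_card: "card (cfgs d) = 2 ^ d"
  unfolding cfgs_def by (simp add: card_PiE numeral_2_eq_2)

lemma cfgs_val: "a \<in> cfgs d \<Longrightarrow> i < d \<Longrightarrow> a i = 0 \<or> a i = 1"
  unfolding cfgs_def by auto

lemma cfgs_out: "a \<in> cfgs d \<Longrightarrow> \<not> i < d \<Longrightarrow> a i = undefined"
  unfolding cfgs_def by auto

definition flip :: "nat \<Rightarrow> (nat \<Rightarrow> nat) \<Rightarrow> (nat \<Rightarrow> nat)" where
  "flip i a = a(i := 1 - a i)"

lemma flip_cfgs: "a \<in> cfgs d \<Longrightarrow> i < d \<Longrightarrow> flip i a \<in> cfgs d"
  unfolding cfgs_def flip_def by (auto simp: PiE_iff extensional_def)

lemma flip_flip: "a \<in> cfgs d \<Longrightarrow> i < d \<Longrightarrow> flip i (flip i a) = a"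
  using cfgs_val[of a d i] unfolding flip_def by auto

lemma sum_flip: "i < d \<Longrightarrow> (\<Sum>a\<in>cfgs d. f (flip i a)) = (\<Sum>a\<in>cfgs d. (f a :: real))"
  by (rule sum.reindex_bij_witness[where i="flip i" and j="flip i"])
     (auto simp: flip_flip flip_cfgs)

definition compl_ok :: bool where "compl_ok = True"

lemma compl_cfgs: "a \<in> cfgs d \<Longrightarrow> compl_cfg d a \<in> cfgs d"
  unfolding cfgs_def compl_cfg_def by (auto simp: PiE_iff)

lemma compl_compl: "a \<in> cfgs d \<Longrightarrow> compl_cfg d (compl_cfg d a) = a"
  unfolding compl_cfg_def
proof (rule ext)
  fix i assume "a \<in> cfgs d"
  then show "(\<lambda>i\<in>{0..<d}. 1 - (\<lambda>i\<in>{0..<d}. 1 - a i) i) i = a i"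
    using cfgs_val[of a d i] cfgs_out[of a d i] by auto
qed

lemma sum_compl: "(\<Sum>a\<in>cfgs d. f (compl_cfg d a)) = (\<Sum>a\<in>cfgs d. (f a :: real))"
  by (rule sum.reindex_bij_witness[where i="compl_cfg d" and j="compl_cfg d"])
     (auto simp: compl_compl compl_cfgs)

definition chib :: "nat \<Rightarrow> (nat \<Rightarrow> nat) \<Rightarrow> (nat \<Rightarrow> nat) \<Rightarrow> real" where
  "chib d b a = (-1) ^ dotp d a b"

lemma dotp_comm: "dotp d a b = dotp d b a"
  unfolding dotp_def by (simp add: mult.commute)

lemma dotp_flip:
  assumes "x \<in> cfgs d" "y \<in> cfgs d" "i < d"
  shows "(-1::real) ^ dotp d x (flip i y) = (-1) ^ x i * (-1) ^ dotp d x y"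
proof -
  have fin: "finite {..<d}" by simp
  have i: "i \<in> {..<d}" using assms by simp
  have e1: "dotp d x (flip i y) = x i * (1 - y i) + (\<Sum>j\<in>{..<d}-{i}. x j * y j)"
    unfolding dotp_def using sum.remove[OF fin i, of "\<lambda>j. x j * flip i y j"]
    by (simp add: flip_def)
  have e2: "dotp d x y = x i * y i + (\<Sum>j\<in>{..<d}-{i}. x j * y j)"
    unfolding dotp_def using sum.remove[OF fin i, of "\<lambda>j. x j * y j"] by simp
  show ?thesis
    unfolding e1 e2 using cfgs_val[OF assms(1,3)] cfgs_val[OF assms(2,3)]
    by (auto simp: power_add)
qed

lemma orth:
  assumes "a \<in> cfgs d" "a' \<in> cfgs d"
  shows "(\<Sum>b\<in>cfgs d. chib d b a * chib d b a') = (if a = a' then 2 ^ d else 0)"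
proof (cases "a = a'")
  case True
  have "(\<Sum>b\<in>cfgs d. chib d b a * chib d b a') = (\<Sum>b\<in>cfgs d. 1)"
    using True by (intro sum.cong) (auto simp: chib_def power_mult_distrib[symmetric])
  then show ?thesis using True by (simp add: cfgs_card)
next
  case False
  then obtain i where i: "a i \<noteq> a' i" by auto
  have id: "i < d" using i cfgs_out[OF assms(1)] cfgs_out[OF assms(2)] by metis
  let ?S = "(\<Sum>b\<in>cfgs d. chib d b a * chib d b a')"
  have "?S = (\<Sum>b\<in>cfgs d. chib d (flip i b) a * chib d (flip i b) a')"
    using sum_flip[OF id, of "\<lambda>b. chib d b a * chib d b a'"] by simp
  also have "\<dots> = (\<Sum>b\<in>cfgs d. - (chib d b a * chib d b a'))"
  proof (intro sum.cong refl)
    fix b assume b: "b \<in> cfgs d"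
    have "(-1::real) ^ a i * (-1) ^ a' i = -1"
      using i cfgs_val[OF assms(1) id] cfgs_val[OF assms(2) id] by auto
    then have "(-1::real) ^ a i * (-1) ^ a' i * ((-1) ^ dotp d a b * (-1) ^ dotp d a' b)
       = - ((-1) ^ dotp d a b * (-1) ^ dotp d a' b)" by simp
    then show "chib d (flip i b) a * chib d (flip i b) a' = - (chib d b a * chib d b a')"
      unfolding chib_def using dotp_flip[OF assms(1) b id] dotp_flip[OF assms(2) b id]
      by (simp add: ac_simps)
  qed
  also have "\<dots> = - ?S" by (simp add: sum_negf)
  finally show ?thesis using False by simp
qed



lemma loglin_chib: "loglin_int d p b = (1 / 2 ^ d) * (\<Sum>a\<in>cfgs d. chib d b a * ln (p a))"
  unfolding loglin_int_def chib_def by simp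

lemma inversion:
  assumes a: "a \<in> cfgs d"
  shows "(\<Sum>b\<in>cfgs d. loglin_int d p b * chib d b a) = ln (p a)"
proof -
  have "(\<Sum>b\<in>cfgs d. loglin_int d p b * chib d b a)
      = (\<Sum>b\<in>cfgs d. \<Sum>a'\<in>cfgs d. (1 / 2 ^ d) * (ln (p a') * (chib d b a' * chib d b a)))"
    unfolding loglin_chib by (simp add: sum_distrib_left sum_distrib_right ac_simps)
  also have "\<dots> = (\<Sum>a'\<in>cfgs d. (1 / 2 ^ d) * (ln (p a') * (\<Sum>b\<in>cfgs d. chib d b a' * chib d b a)))"
    by (subst sum.swap) (simp add: sum_distrib_left)
  also have "\<dots> = (\<Sum>a'\<in>cfgs d. if a' = a then ln (p a) else 0)"
    by (intro sum.cong refl) (auto simp: orth a)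
  also have "\<dots> = ln (p a)" using a cfgs_fin by simp
  finally show ?thesis .
qed

lemma dotp_compl:
  assumes "a \<in> cfgs d" "b \<in> cfgs d"
  shows "dotp d (compl_cfg d a) b + dotp d a b = wt d b"
  unfolding dotp_def wt_def sum.distrib[symmetric]
proof (intro sum.cong refl)
  fix i assume "i \<in> {..<d}"
  then show "compl_cfg d a i * b i + a i * b i = b i"
    using cfgs_val[OF assms(1), of i] by (auto simp: compl_cfg_def)
qed

lemma chib_compl:
  assumes "a \<in> cfgs d" "b \<in> cfgs d"
  shows "chib d b (compl_cfg d a) = (-1) ^ wt d b * chib d b a"
proof -
  have "(-1::real) ^ wt d b * chib d b a = (-1) ^ (dotp d (compl_cfg d a) b + dotp d a b) * (-1) ^ dotp d a b"
    unfolding dotp_compl[OF assms] chib_def ..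
  also have "\<dots> = (-1) ^ dotp d (compl_cfg d a) b * ((-1) ^ dotp d a b * (-1) ^ dotp d a b)"
    by (simp add: power_add)
  also have "\<dots> = (-1) ^ dotp d (compl_cfg d a) b"
    by (simp add: power_add[symmetric])
  finally show ?thesis unfolding chib_def by simp
qed

lemma odd_vanish:
  assumes pal: "\<forall>a\<in>cfgs d. f (compl_cfg d a) = f a"
    and b: "b \<in> cfgs d" and odd: "odd (wt d b)"
  shows "(\<Sum>a\<in>cfgs d. chib d b a * f a) = 0"
proof -
  let ?S = "(\<Sum>a\<in>cfgs d. chib d b a * f a)"
  have "?S = (\<Sum>a\<in>cfgs d. chib d b (compl_cfg d a) * f (compl_cfg d a))"
    using sum_compl[of "\<lambda>a. chib d b a * f a" d] by simp
  also have "\<dots> = (\<Sum>a\<in>cfgs d. - (chib d b a * f a))"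
    by (intro sum.cong refl) (simp add: chib_compl b pal odd)
  finally show ?thesis by (simp add: sum_negf)
qed

lemma odd_loglin:
  assumes pal: "\<forall>a\<in>cfgs d. p (compl_cfg d a) = p a"
    and b: "b \<in> cfgs d" and odd: "odd (wt d b)"
  shows "loglin_int d p b = 0"
  unfolding loglin_chib using odd_vanish[of d "\<lambda>a. ln (p a)", OF _ b odd] pal by simp


lemma wt_card:
  assumes "b \<in> cfgs d"
  shows "wt d b = card {i\<in>{..<d}. b i = 1}"
proof -
  have "card {i\<in>{..<d}. b i = 1} = (\<Sum>i\<in>{i\<in>{..<d}. b i = 1}. 1)" by simp
  also have "\<dots> = (\<Sum>i<d. if b i = 1 then 1 else 0)"
    by (subst sum.inter_filter) auto
  also have "\<dots> = wt d b" unfolding wt_def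
    using cfgs_val[OF assms] by (intro sum.cong) auto
  finally show ?thesis by simp
qed

lemma wt0_dotp:
  assumes "b \<in> cfgs d" "wt d b = 0"
  shows "dotp d a b = 0"
  using assms unfolding wt_def dotp_def by simp

lemma pair_vec_cfgs: "pair_vec d s t \<in> cfgs d"
  unfolding pair_vec_def cfgs_def by auto

lemma dotp_pair:
  assumes "s < d" "t < d" "s \<noteq> t"
  shows "dotp d a (pair_vec d s t) = a s + a t"
proof -
  have "dotp d a (pair_vec d s t) = (\<Sum>i<d. if i \<in> {s,t} then a i else 0)"
    unfolding dotp_def pair_vec_def by (intro sum.cong) auto
  also have "\<dots> = (\<Sum>i\<in>{i\<in>{..<d}. i \<in> {s,t}}. a i)"
    by (subst sum.inter_filter) auto
  also have "{i\<in>{..<d}. i \<in> {s,t}} = {s,t}" using assms by auto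
  finally show ?thesis using assms by simp
qed

lemma wt_pair: "s < d \<Longrightarrow> t < d \<Longrightarrow> s \<noteq> t \<Longrightarrow> wt d (pair_vec d s t) = 2"
  using dotp_pair[of s d t "\<lambda>_. 1"] unfolding dotp_def wt_def by simp

lemma wt2_pair:
  assumes b: "b \<in> cfgs d" and w: "wt d b = 2"
  shows "\<exists>s t. s < d \<and> t < d \<and> s \<noteq> t \<and> b = pair_vec d s t"
proof -
  have "card {i\<in>{..<d}. b i = 1} = 2" using wt_card[OF b] w by simp
  then obtain s t where st: "{i\<in>{..<d}. b i = 1} = {s,t}" "s \<noteq> t"
    by (metis card_2_iff)
  have m: "i \<in> {s,t} \<longleftrightarrow> i < d \<and> b i = 1" for i
    using st(1) by blast
  have "s < d" "t < d" using m[of s] m[of t] by auto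
  moreover have "b = pair_vec d s t"
  proof
    fix i show "b i = pair_vec d s t i"
    proof (cases "i < d")
      case True
      then show ?thesis using cfgs_val[OF b True] m[of i] unfolding pair_vec_def
        by auto
    next
      case False
      then show ?thesis using cfgs_out[OF b False] unfolding pair_vec_def by auto
    qed
  qed
  ultimately show ?thesis using st by blast
qed

lemma chib_pair: "s < d \<Longrightarrow> t < d \<Longrightarrow> s \<noteq> t \<Longrightarrow> chib d (pair_vec d s t) a = (-1) ^ (a s + a t)"
  unfolding chib_def by (simp add: dotp_pair)



definition chi :: "nat \<Rightarrow> nat \<Rightarrow> (nat \<Rightarrow> nat) \<Rightarrow> real" where
  "chi s t a = (-1) ^ (a s + a t)"

definition phi :: "nat \<Rightarrow> ((nat \<Rightarrow> nat) \<Rightarrow> nat) \<Rightarrow> nat set \<Rightarrow> (nat \<Rightarrow> nat) \<Rightarrow> real" where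
  "phi d n K a = 1 + (\<Sum>s\<in>K. \<Sum>t\<in>K. if s < t then chi s t a * xi_hat d n s t else 0)"

lemma smh_phi: "sym_marg_hat d n K a = phi d n K a / 2 ^ card K"
  unfolding sym_marg_hat_def phi_def chi_def ..

lemma chi_flip:
  assumes "a \<in> cfgs d" "i < d" "s \<noteq> t"
  shows "chi s t (flip i a) = (if i = s \<or> i = t then - chi s t a else chi s t a)"
  using cfgs_val[OF assms(1,2)] assms(3) unfolding chi_def flip_def
  by (auto simp: power_add)

lemma chi_compl:
  assumes "a \<in> cfgs d" "s < d" "t < d"
  shows "chi s t (compl_cfg d a) = chi s t a"
  using cfgs_val[OF assms(1,2)] cfgs_val[OF assms(1,3)] assms unfolding chi_def compl_cfg_def
  by auto

lemma chi_sq: "chi s t a * chi s t a = 1"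
  unfolding chi_def by (simp add: power_add[symmetric])

lemma chi_comm: "chi s t a = chi t s a"
  unfolding chi_def by (simp add: add.commute)

lemma xi_comm: "xi_hat d n s t = xi_hat d n t s"
  unfolding xi_hat_def by (simp add: add.commute)

lemma sum_chi_zero:
  assumes "s < d" "s \<noteq> t"
  shows "(\<Sum>a\<in>cfgs d. chi s t a) = 0"
proof -
  let ?S = "\<Sum>a\<in>cfgs d. chi s t a"
  have "?S = (\<Sum>a\<in>cfgs d. chi s t (flip s a))" using sum_flip[OF assms(1)] by simp
  also have "\<dots> = (\<Sum>a\<in>cfgs d. - chi s t a)"
    by (intro sum.cong refl) (simp add: chi_flip assms)
  finally show ?thesis by (simp add: sum_negf)
qed

lemma sum_chi_chi:
  assumes "s < d" "t < d" "u < d" "v < d" "s < t" "u < v"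
  shows "(\<Sum>a\<in>cfgs d. chi s t a * chi u v a) = (if s = u \<and> t = v then 2 ^ d else 0)"
proof (cases "s = u \<and> t = v")
  case True
  then show ?thesis by (simp add: chi_sq cfgs_card)
next
  case False
  have "\<exists>i. i < d \<and> (i = s \<or> i = t) \<noteq> (i = u \<or> i = v)"
  proof (cases "s = u")
    case True
    then show ?thesis using False assms by (intro exI[of _ t]) auto
  next
    case su: False
    show ?thesis
    proof (cases "s = v")
      case True
      then show ?thesis using su assms by (intro exI[of _ u]) auto
    next
      case False
      then show ?thesis using su assms by (intro exI[of _ s]) auto
    qed
  qed
  then obtain i where i: "i < d" "(i = s \<or> i = t) \<noteq> (i = u \<or> i = v)" by blast
  let ?S = "\<Sum>a\<in>cfgs d. chi s t a * chi u v a"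
  have "?S = (\<Sum>a\<in>cfgs d. chi s t (flip i a) * chi u v (flip i a))" using sum_flip[OF i(1), of "\<lambda>a. chi s t a * chi u v a"] by simp
  also have "\<dots> = (\<Sum>a\<in>cfgs d. - (chi s t a * chi u v a))"
  proof (intro sum.cong refl)
    fix a assume a: "a \<in> cfgs d"
    have e1: "chi s t (flip i a) = (if i = s \<or> i = t then -1 else 1) * chi s t a"
      using chi_flip[OF a i(1), of s t] assms by simp
    have e2: "chi u v (flip i a) = (if i = u \<or> i = v then -1 else 1) * chi u v a"
      using chi_flip[OF a i(1), of u v] assms by simp
    have "(if i = s \<or> i = t then -1 else 1) * (if i = u \<or> i = v then -1 else (1::real)) = -1"
      using i(2) by (cases "i = s \<or> i = t") auto
    then show "chi s t (flip i a) * chi u v (flip i a) = - (chi s t a * chi u v a)"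
      unfolding e1 e2 by (metis (no_types, lifting) mult.assoc mult.left_commute mult_minus1)
  qed
  finally show ?thesis using False by (simp add: sum_negf)
qed

definition dep :: "nat \<Rightarrow> nat set \<Rightarrow> ((nat \<Rightarrow> nat) \<Rightarrow> real) \<Rightarrow> bool" where
  "dep d K f = (\<forall>a\<in>cfgs d. \<forall>a'\<in>cfgs d. (\<forall>i\<in>K. a i = a' i) \<longrightarrow> f a = f a')"

lemma depD: "dep d K f \<Longrightarrow> a \<in> cfgs d \<Longrightarrow> a' \<in> cfgs d \<Longrightarrow> (\<And>i. i \<in> K \<Longrightarrow> a i = a' i) \<Longrightarrow> f a = f a'"
  unfolding dep_def by blast

lemma depI: "(\<And>a a'. a \<in> cfgs d \<Longrightarrow> a' \<in> cfgs d \<Longrightarrow> (\<And>i. i \<in> K \<Longrightarrow> a i = a' i) \<Longrightarrow> f a = f a') \<Longrightarrow> dep d K f"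
  unfolding dep_def by blast

lemma dep_flip:
  assumes "dep d K f" "a \<in> cfgs d" "i < d" "i \<notin> K"
  shows "f (flip i a) = f a"
  by (rule sym, rule depD[OF assms(1) assms(2) flip_cfgs[OF assms(2,3)]])
     (use assms(4) in \<open>auto simp: flip_def\<close>)

lemma dep_mono: "dep d K f \<Longrightarrow> K \<subseteq> K' \<Longrightarrow> dep d K' f"
  by (rule depI, erule depD) auto

lemma dep_op: "dep d K f \<Longrightarrow> dep d K g \<Longrightarrow> dep d K (\<lambda>a. H (f a) (g a))"
proof (rule depI)
  fix a a' assume "dep d K f" "dep d K g" "a \<in> cfgs d" "a' \<in> cfgs d" "\<And>i. i \<in> K \<Longrightarrow> a i = a' i"
  then have "f a = f a'" "g a = g a'" using depD by blast+
  then show "H (f a) (g a) = H (f a') (g a')" by simp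
qed

lemma dep_comp: "dep d K f \<Longrightarrow> dep d K (\<lambda>a. H (f a))"
  using dep_op[of d K f f "\<lambda>x y. H x"] by simp

lemma dep_const: "dep d K (\<lambda>a. c)"
  by (rule depI) simp

lemma dep_prod:
  "(\<And>j. j \<in> J \<Longrightarrow> dep d K (f j)) \<Longrightarrow> dep d K (\<lambda>a. \<Prod>j\<in>J. f j a)"
proof (rule depI)
  fix a a' assume "\<And>j. j \<in> J \<Longrightarrow> dep d K (f j)" "a \<in> cfgs d" "a' \<in> cfgs d" "\<And>i. i \<in> K \<Longrightarrow> a i = a' i"
  then show "(\<Prod>j\<in>J. f j a) = (\<Prod>j\<in>J. f j a')" by (intro prod.cong refl) (rule depD)
qed

lemma dep_sum:
  "(\<And>j. j \<in> J \<Longrightarrow> dep d K (f j)) \<Longrightarrow> dep d K (\<lambda>a. \<Sum>j\<in>J. f j a)"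
proof (rule depI)
  fix a a' assume "\<And>j. j \<in> J \<Longrightarrow> dep d K (f j)" "a \<in> cfgs d" "a' \<in> cfgs d" "\<And>i. i \<in> K \<Longrightarrow> a i = a' i"
  then show "(\<Sum>j\<in>J. f j a) = (\<Sum>j\<in>J. f j a')" by (intro sum.cong refl) (rule depD)
qed

lemma dep_phi: "dep d K (phi d n K)"
proof (rule depI)
  fix a a' :: "nat \<Rightarrow> nat" assume "\<And>i. i \<in> K \<Longrightarrow> a i = a' i"
  then show "phi d n K a = phi d n K a'"
    unfolding phi_def chi_def by (intro arg_cong[where f="\<lambda>x. 1 + x"] sum.cong refl) simp
qed

lemma dep_chi: "s \<in> K \<Longrightarrow> t \<in> K \<Longrightarrow> dep d K (chi s t)"
  by (rule depI) (simp add: chi_def)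

definition sym1 :: "nat \<Rightarrow> ((nat \<Rightarrow> nat) \<Rightarrow> real) \<Rightarrow> (nat \<Rightarrow> nat) \<Rightarrow> real" where
  "sym1 i f a = (f a + f (flip i a)) / 2"

fun symL :: "nat list \<Rightarrow> ((nat \<Rightarrow> nat) \<Rightarrow> real) \<Rightarrow> (nat \<Rightarrow> nat) \<Rightarrow> real" where
  "symL [] f = f"
| "symL (i # is) f = sym1 i (symL is f)"

lemma sum_sym1:
  assumes "i < d" "\<forall>a\<in>cfgs d. F (flip i a) = F a"
  shows "(\<Sum>a\<in>cfgs d. F a * sym1 i G a) = (\<Sum>a\<in>cfgs d. F a * G a)"
proof -
  have "(\<Sum>a\<in>cfgs d. F a * G (flip i a)) = (\<Sum>a\<in>cfgs d. F (flip i a) * G (flip i a))"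
    using assms(2) by (intro sum.cong) auto
  also have "\<dots> = (\<Sum>a\<in>cfgs d. F a * G a)" using sum_flip[OF assms(1), of "\<lambda>a. F a * G a"] by simp
  finally have "(\<Sum>a\<in>cfgs d. F a * G (flip i a)) = (\<Sum>a\<in>cfgs d. F a * G a)" .
  then show ?thesis unfolding sym1_def
    by (simp add: distrib_left sum.distrib sum_divide_distrib[symmetric])
qed

lemma sum_symL:
  assumes "set is \<subseteq> {..<d}" "\<forall>i\<in>set is. \<forall>a\<in>cfgs d. F (flip i a) = F a"
  shows "(\<Sum>a\<in>cfgs d. F a * symL is G a) = (\<Sum>a\<in>cfgs d. F a * G a)"
  using assms
proof (induction "is")
  case Nil then show ?case by simp
next
  case (Cons i "is")
  then show ?case using sum_sym1[of i d F "symL is G"] by simp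
qed

lemma symL_mult:
  assumes "set is \<subseteq> {..<d}" "\<forall>i\<in>set is. \<forall>a\<in>cfgs d. F (flip i a) = F a"
  shows "\<forall>a\<in>cfgs d. symL is (\<lambda>a. F a * G a) a = F a * symL is G a"
  using assms
proof (induction "is")
  case Nil then show ?case by simp
next
  case (Cons i "is")
  show ?case
  proof
    fix a assume a: "a \<in> cfgs d"
    have i: "i < d" using Cons.prems by simp
    have fa: "flip i a \<in> cfgs d" using flip_cfgs[OF a i] .
    have IH: "\<forall>a\<in>cfgs d. symL is (\<lambda>a. F a * G a) a = F a * symL is G a"
      using Cons by simp
    show "symL (i # is) (\<lambda>a. F a * G a) a = F a * symL (i # is) G a"
      using IH a fa Cons.prems(2) unfolding symL.simps sym1_def
      by (simp add: distrib_left)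
  qed
qed

lemma dep_sym1:
  assumes i: "i < d" and df: "dep d K f"
  shows "dep d (K - {i}) (sym1 i f)"
proof (rule depI)
  fix a a' assume a: "a \<in> cfgs d" and a': "a' \<in> cfgs d" and ag: "\<And>j. j \<in> K - {i} \<Longrightarrow> a j = a' j"
  have fa: "flip i a \<in> cfgs d" and fa': "flip i a' \<in> cfgs d" using flip_cfgs a a' i by auto
  have v: "a i \<le> 1" "a' i \<le> 1" using cfgs_val[OF a i] cfgs_val[OF a' i] by auto
  show "sym1 i f a = sym1 i f a'"
  proof (cases "a i = a' i")
    case True
    have "f a = f a'" by (rule depD[OF df a a']) (use ag True in \<open>metis Diff_iff singletonD\<close>)
    moreover have "f (flip i a) = f (flip i a')"
      by (rule depD[OF df fa fa']) (use ag True in \<open>auto simp: flip_def\<close>)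
    ultimately show ?thesis unfolding sym1_def by simp
  next
    case False
    then have e: "a' i = 1 - a i" using cfgs_val[OF a i] cfgs_val[OF a' i] by auto
    have "f a = f (flip i a')"
      by (rule depD[OF df a fa']) (use ag e v in \<open>auto simp: flip_def\<close>)
    moreover have "f (flip i a) = f a'"
      by (rule depD[OF df fa a']) (use ag e v in \<open>auto simp: flip_def\<close>)
    ultimately show ?thesis unfolding sym1_def by simp
  qed
qed

lemma dep_symL:
  assumes "set is \<subseteq> {..<d}" "dep d K f"
  shows "dep d (K - set is) (symL is f)"
  using assms
proof (induction "is")
  case Nil then show ?case by simp
next
  case (Cons i "is")
  then have "dep d (K - set is - {i}) (sym1 i (symL is f))"
    by (intro dep_sym1) auto
  moreover have "K - set (i # is) = K - set is - {i}" by auto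
  ultimately show ?case by simp
qed

lemma symL_pos:
  assumes "set is \<subseteq> {..<d}" "\<forall>a\<in>cfgs d. 0 < f a"
  shows "\<forall>a\<in>cfgs d. 0 < symL is f a"
  using assms
proof (induction "is")
  case Nil then show ?case by simp
next
  case (Cons i "is")
  then show ?case by (auto simp: sym1_def flip_cfgs intro!: add_pos_pos)
qed

lemma sum_remove_if:
  "finite K \<Longrightarrow> (\<Sum>s\<in>K-{i}. g s) = (\<Sum>s\<in>K. if s \<noteq> i then g s else (0::real))"
proof -
  assume "finite K"
  have "K - {i} = {s\<in>K. s \<noteq> i}" by auto
  then show ?thesis using \<open>finite K\<close> by (simp add: sum.inter_filter)
qed

lemma sym1_phi:
  assumes i: "i < d" and a: "a \<in> cfgs d" and fin: "finite K"
  shows "sym1 i (phi d n K) a = phi d n (K - {i}) a"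
proof -
  define A where "A s t = (if s < t then chi s t a * xi_hat d n s t else 0)" for s t
  define B where "B s t = (if s < t then chi s t (flip i a) * xi_hat d n s t else 0)" for s t
  define T where "T s t = (if s \<noteq> i then (if t \<noteq> i then A s t else 0) else 0)" for s t
  have pt: "(A s t + B s t) / 2 = T s t" for s t
    unfolding A_def B_def T_def using chi_flip[OF a i, of s t] by auto
  have "sym1 i (phi d n K) a = 1 + ((\<Sum>s\<in>K. \<Sum>t\<in>K. A s t) + (\<Sum>s\<in>K. \<Sum>t\<in>K. B s t)) / 2"
  proof -
    have e1: "phi d n K a = 1 + (\<Sum>s\<in>K. \<Sum>t\<in>K. A s t)" unfolding phi_def A_def ..
    have e2: "phi d n K (flip i a) = 1 + (\<Sum>s\<in>K. \<Sum>t\<in>K. B s t)" unfolding phi_def B_def ..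
    have h: "\<And>x y::real. (1 + x + (1 + y))/2 = 1 + (x+y)/2" by (simp add: field_simps)
    show ?thesis unfolding sym1_def e1 e2 by (rule h)
  qed
  also have "((\<Sum>s\<in>K. \<Sum>t\<in>K. A s t) + (\<Sum>s\<in>K. \<Sum>t\<in>K. B s t)) / 2
      = (\<Sum>s\<in>K. \<Sum>t\<in>K. (A s t + B s t) / 2)"
    by (simp add: sum.distrib[symmetric] sum_divide_distrib)
  also have "\<dots> = (\<Sum>s\<in>K. \<Sum>t\<in>K. T s t)" by (simp add: pt)
  also have "\<dots> = (\<Sum>s\<in>K. if s \<noteq> i then (\<Sum>t\<in>K. if t \<noteq> i then A s t else 0) else 0)"
    unfolding T_def by (intro sum.cong refl) auto
  also have "\<dots> = (\<Sum>s\<in>K-{i}. \<Sum>t\<in>K-{i}. A s t)"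
    using fin by (simp add: sum_remove_if T_def)
  finally show ?thesis unfolding phi_def A_def .
qed

lemma symL_phi:
  assumes "set is \<subseteq> {..<d}" "finite K"
  shows "\<forall>a\<in>cfgs d. symL is (phi d n K) a = phi d n (K - set is) a"
  using assms
proof (induction "is")
  case Nil then show ?case by simp
next
  case (Cons i "is")
  show ?case
  proof
    fix a assume a: "a \<in> cfgs d"
    have i: "i < d" using Cons.prems by simp
    have IH: "\<forall>a\<in>cfgs d. symL is (phi d n K) a = phi d n (K - set is) a" using Cons by simp
    have "symL (i # is) (phi d n K) a = sym1 i (phi d n (K - set is)) a"
      using IH a flip_cfgs[OF a i] by (simp add: sym1_def)
    also have "\<dots> = phi d n (K - set is - {i}) a" using sym1_phi[OF i a] Cons.prems by simp
    moreover have "K - set (i # is) = K - set is - {i}" by auto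
    ultimately show "symL (i # is) (phi d n K) a = phi d n (K - set (i # is)) a"
      by simp
  qed
qed



lemma extend_clique:
  assumes "complete_set d E K0"
  shows "\<exists>C. is_clique d E C \<and> K0 \<subseteq> C"
proof -
  let ?A = "{K. complete_set d E K}"
  have fin: "finite ?A"
    by (rule finite_subset[of _ "Pow {0..<d}"]) (auto simp: complete_set_def)
  obtain m where m: "m \<in> ?A" "K0 \<subseteq> m" "\<forall>b\<in>?A. m \<subseteq> b \<longrightarrow> m = b"
    using finite_has_maximal2[OF fin, of K0] assms by auto
  then have "is_clique d E m" unfolding is_clique_def by auto
  then show ?thesis using m by blast
qed

locale pseq =
  fixes d :: nat and E :: "nat set set" and cs :: "nat set list"
  assumes G: "is_graph d E"
    and P: "perfect_clique_seq d E cs"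
    and C3: "\<forall>C. is_clique d E C \<longrightarrow> card C \<le> 3"
begin

definition CC :: "nat \<Rightarrow> nat set" where "CC j = cs ! j"
definition UU :: "nat \<Rightarrow> nat set" where "UU j = \<Union>(set (take j cs))"
definition SS :: "nat \<Rightarrow> nat set" where "SS j = CC j \<inter> UU j"

lemma set_cs: "C \<in> set cs \<longleftrightarrow> is_clique d E C"
  using P unfolding perfect_clique_seq_def by auto

lemma clique_props:
  assumes "C \<in> set cs"
  shows "C \<subseteq> {0..<d}" "finite C" "card C \<le> 3"
    "\<And>s t. s \<in> C \<Longrightarrow> t \<in> C \<Longrightarrow> s \<noteq> t \<Longrightarrow> {s,t} \<in> E"
  using assms C3 unfolding set_cs is_clique_def complete_set_def
  by (auto intro: finite_subset)

lemma CC_in: "j < length cs \<Longrightarrow> CC j \<in> set cs"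
  unfolding CC_def by simp

lemma CC_sub: "j < length cs \<Longrightarrow> CC j \<subseteq> {0..<d}"
  using clique_props(1)[OF CC_in] .

lemma CC_fin: "j < length cs \<Longrightarrow> finite (CC j)"
  using clique_props(2)[OF CC_in] .

lemma UU_Suc: "j < length cs \<Longrightarrow> UU (Suc j) = UU j \<union> CC j"
  unfolding UU_def CC_def by (simp add: take_Suc_conv_app_nth Un_commute)

lemma UU_0: "UU 0 = {}" unfolding UU_def by simp

lemma UU_sub: "j \<le> length cs \<Longrightarrow> UU j \<subseteq> {0..<d}"
proof (induction j)
  case 0 then show ?case by (simp add: UU_0)
next
  case (Suc j) then show ?case using UU_Suc[of j] CC_sub[of j] by auto
qed

lemma UU_fin: "j \<le> length cs \<Longrightarrow> finite (UU j)"
  using UU_sub finite_subset by blast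

lemma CC_UU: "i < k \<Longrightarrow> k \<le> length cs \<Longrightarrow> CC i \<subseteq> UU k"
  unfolding UU_def CC_def
  by (metis Union_upper nth_mem nth_take length_take min.absorb2 order.strict_trans2 in_set_conv_nth)

lemma SS_sub: "SS j \<subseteq> CC j" unfolding SS_def by auto

lemma SS_0: "SS 0 = {}" unfolding SS_def UU_0 by simp

lemma sep: "0 < j \<Longrightarrow> j < length cs \<Longrightarrow> \<exists>i<j. SS j \<subseteq> CC i"
  using P unfolding perfect_clique_seq_def SS_def CC_def UU_def by blast

lemma cover: "UU (length cs) = {0..<d}"
proof
  show "UU (length cs) \<subseteq> {0..<d}" using UU_sub by simp
  show "{0..<d} \<subseteq> UU (length cs)"
  proof
    fix v assume v: "v \<in> {0..<d}"
    have "complete_set d E {v}" using v unfolding complete_set_def by auto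
    then obtain C where "is_clique d E C" "v \<in> C" using extend_clique by blast
    then show "v \<in> UU (length cs)" unfolding UU_def using set_cs by auto
  qed
qed

lemma edge_clique:
  assumes "s < d" "t < d" "s \<noteq> t" "{s,t} \<in> E"
  shows "\<exists>C\<in>set cs. s \<in> C \<and> t \<in> C"
proof -
  have "complete_set d E {s,t}" using assms unfolding complete_set_def by (auto simp: insert_commute)
  then obtain C where "is_clique d E C" "{s,t} \<subseteq> C" using extend_clique by blast
  then show ?thesis using set_cs by auto
qed

lemma cs_ne: "cs \<noteq> []"
proof -
  have "complete_set d E {}" unfolding complete_set_def by auto
  then obtain C where "is_clique d E C" using extend_clique by blast
  then show ?thesis using set_cs by auto
qed

lemma card_telescope:
  "k \<le> length cs \<Longrightarrow> (\<Prod>j<k. (2::real) ^ card (SS j) / 2 ^ card (CC j)) = 1 / 2 ^ card (UU k)"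
proof (induction k)
  case 0 then show ?case by (simp add: UU_0)
next
  case (Suc k)
  have k: "k < length cs" using Suc by simp
  have c: "card (UU k) + card (CC k) = card (UU (Suc k)) + card (SS k)"
    using card_Un_Int[OF UU_fin[of k] CC_fin[OF k]] k UU_Suc[OF k]
    unfolding SS_def by (simp add: Int_commute)
  have e: "(2::real) ^ card (UU (Suc k)) * 2 ^ card (SS k) = 2 ^ card (UU k) * 2 ^ card (CC k)"
    by (simp add: power_add[symmetric] c)
  have "(\<Prod>j<Suc k. (2::real) ^ card (SS j) / 2 ^ card (CC j))
      = 1 / 2 ^ card (UU k) * (2 ^ card (SS k) / 2 ^ card (CC k))"
    using Suc k by simp
  also have "\<dots> = (2 ^ card (UU (Suc k)) * 2 ^ card (SS k)) / (2 ^ card (UU (Suc k)) * (2 ^ card (UU k) * 2 ^ card (CC k)))"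
    by (simp add: field_simps)
  also have "\<dots> = 1 / 2 ^ card (UU (Suc k))" unfolding e by simp
  finally show ?case .
qed

end



lemma swap3: "(\<Sum>a\<in>A. \<Sum>s\<in>K. \<Sum>t\<in>L. F a s t) = (\<Sum>s\<in>K. \<Sum>t\<in>L. \<Sum>a\<in>A. (F a s t :: real))"
  by (subst sum.swap, rule sum.cong[OF refl], rule sum.swap)

lemma sum_if0: "(\<Sum>a\<in>A. if P then f a else 0) = (if P then (\<Sum>a\<in>A. f a) else (0::real))"
  by simp

lemma sum_phi:
  assumes "K \<subseteq> {..<d}" "finite K"
  shows "(\<Sum>a\<in>cfgs d. phi d n K a) = 2 ^ d"
proof -
  have "(\<Sum>a\<in>cfgs d. phi d n K a) = (\<Sum>a\<in>cfgs d. 1) +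
     (\<Sum>s\<in>K. \<Sum>t\<in>K. if s < t then (\<Sum>a\<in>cfgs d. chi s t a) * xi_hat d n s t else 0)"
    unfolding phi_def sum.distrib swap3 sum_if0 by (simp only: sum_distrib_right)
  also have "\<dots> = 2 ^ d"
  proof -
    have "\<forall>s\<in>K. \<forall>t\<in>K. (if s < t then (\<Sum>a\<in>cfgs d. chi s t a) * xi_hat d n s t else 0) = 0"
      using assms sum_chi_zero by auto
    then show ?thesis by (simp add: cfgs_card)
  qed
  finally show ?thesis .
qed

lemma sum_chi_phi:
  assumes "K \<subseteq> {..<d}" "finite K" "s \<in> K" "t \<in> K" "s < t"
  shows "(\<Sum>a\<in>cfgs d. chi s t a * phi d n K a) = 2 ^ d * xi_hat d n s t"
proof -
  have "(\<Sum>a\<in>cfgs d. chi s t a * phi d n K a) = (\<Sum>a\<in>cfgs d. chi s t a) +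
     (\<Sum>u\<in>K. \<Sum>v\<in>K. if u < v then (\<Sum>a\<in>cfgs d. chi s t a * chi u v a) * xi_hat d n u v else 0)"
  proof -
    have "(\<Sum>a\<in>cfgs d. chi s t a * phi d n K a) = (\<Sum>a\<in>cfgs d. chi s t a) +
     (\<Sum>a\<in>cfgs d. \<Sum>u\<in>K. \<Sum>v\<in>K. if u < v then (chi s t a * chi u v a) * xi_hat d n u v else 0)"
      unfolding phi_def distrib_left sum.distrib
      by (simp add: sum_distrib_left if_distrib[of "\<lambda>x. chi s t _ * x"] ac_simps cong: if_cong)
    also have "\<dots> = (\<Sum>a\<in>cfgs d. chi s t a) +
     (\<Sum>u\<in>K. \<Sum>v\<in>K. if u < v then (\<Sum>a\<in>cfgs d. chi s t a * chi u v a) * xi_hat d n u v else 0)"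
      unfolding swap3 sum_if0 by (simp only: sum_distrib_right)
    finally show ?thesis .
  qed
  also have "\<dots> = (\<Sum>u\<in>K. \<Sum>v\<in>K. if u = s then (if v = t then 2 ^ d * xi_hat d n s t else 0) else 0)"
  proof -
    have z: "(\<Sum>a\<in>cfgs d. chi s t a) = 0" using assms sum_chi_zero by auto
    have "\<forall>u\<in>K. \<forall>v\<in>K. (if u < v then (\<Sum>a\<in>cfgs d. chi s t a * chi u v a) * xi_hat d n u v else 0)
       = (if u = s then if v = t then 2 ^ d * xi_hat d n s t else 0 else 0)"
      using assms sum_chi_chi[of s d t] by (auto simp: subset_eq)
    then show ?thesis unfolding z by simp
  qed
  also have "\<dots> = (\<Sum>u\<in>K. if u = s then (\<Sum>v\<in>K. if v = t then 2 ^ d * xi_hat d n s t else 0) else 0)"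
    by (intro sum.cong refl) auto
  also have "\<dots> = 2 ^ d * xi_hat d n s t" using assms by (simp add: sum.delta)
  finally show ?thesis by simp
qed

lemma phi_empty: "phi d n {} a = 1" unfolding phi_def by simp

locale pseq2 = pseq +
  fixes n :: "(nat \<Rightarrow> nat) \<Rightarrow> nat"
  assumes pos: "\<forall>C\<in>set cs. \<forall>a\<in>cfgs d. 0 < sym_marg_hat d n C a"
begin

definition RL :: "nat \<Rightarrow> nat list" where "RL k = sorted_list_of_set (CC k - UU k)"

lemma RL_set: "k < length cs \<Longrightarrow> set (RL k) = CC k - UU k"
  unfolding RL_def using CC_fin by simp

lemma RL_sub: assumes "k < length cs" shows "set (RL k) \<subseteq> {..<d}"
  using RL_set[OF assms] CC_sub[OF assms] by auto

lemma CC_RL: "k < length cs \<Longrightarrow> CC k - set (RL k) = SS k"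
  using RL_set unfolding SS_def by auto

lemma phiC_pos: "k < length cs \<Longrightarrow> a \<in> cfgs d \<Longrightarrow> 0 < phi d n (CC k) a"
  using pos CC_in[of k] by (auto simp: smh_phi zero_less_divide_iff)

lemma phiS_eq: "k < length cs \<Longrightarrow> a \<in> cfgs d \<Longrightarrow> symL (RL k) (phi d n (CC k)) a = phi d n (SS k) a"
  using symL_phi[OF RL_sub CC_fin, of k k n] CC_RL by auto

lemma phiS_pos: "k < length cs \<Longrightarrow> a \<in> cfgs d \<Longrightarrow> 0 < phi d n (SS k) a"
  using symL_pos[OF RL_sub, of k "phi d n (CC k)"] phiC_pos phiS_eq by auto

definition psi :: "nat \<Rightarrow> (nat \<Rightarrow> nat) \<Rightarrow> real" where
  "psi j a = phi d n (CC j) a / phi d n (SS j) a"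

definition PP :: "nat \<Rightarrow> (nat \<Rightarrow> nat) \<Rightarrow> real" where
  "PP k a = (\<Prod>j<k. psi j a)"

lemma dep_psi: "dep d (CC j) (psi j)"
  unfolding psi_def
  by (rule dep_op[OF dep_phi dep_mono[OF dep_phi SS_sub]])

lemma dep_PP: "k \<le> length cs \<Longrightarrow> dep d (UU k) (PP k)"
  unfolding PP_def by (rule dep_prod, rule dep_mono[OF dep_psi CC_UU]) auto

lemma invariant:
  "k \<le> length cs \<Longrightarrow> \<forall>i<k. \<forall>g. dep d (CC i) g \<longrightarrow>
      (\<Sum>a\<in>cfgs d. g a * PP k a) = (\<Sum>a\<in>cfgs d. g a * phi d n (CC i) a)"
proof (induction k)
  case 0 then show ?case by simp
next
  case (Suc k)
  have k: "k < length cs" using Suc.prems by simp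
  have IH: "\<forall>i<k. \<forall>g. dep d (CC i) g \<longrightarrow>
      (\<Sum>a\<in>cfgs d. g a * PP k a) = (\<Sum>a\<in>cfgs d. g a * phi d n (CC i) a)"
    using Suc k by simp
  let ?R = "RL k"
  have Rsub: "set ?R \<subseteq> {..<d}" using RL_sub[OF k] .
  have RU: "\<forall>i\<in>set ?R. i \<notin> UU k" using RL_set[OF k] by auto
  have RS: "\<forall>i\<in>set ?R. i \<notin> SS k" using RL_set[OF k] unfolding SS_def by auto
  have dPk: "dep d (UU k) (PP k)" using dep_PP k by simp
  have PPs: "PP (Suc k) a = PP k a * psi k a" for a unfolding PP_def by simp
  have inv_of: "\<forall>i\<in>set ?R. \<forall>a\<in>cfgs d. F (flip i a) = F a" if "dep d (UU k) F" for F
    using dep_flip[OF that] RU Rsub by auto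
  have inv_ofS: "\<forall>i\<in>set ?R. \<forall>a\<in>cfgs d. F (flip i a) = F a" if "dep d (SS k) F" for F
    using dep_flip[OF that] RS Rsub by auto
  have depInvS: "dep d (SS k) (\<lambda>a. 1 / phi d n (SS k) a)" by (rule dep_comp[OF dep_phi])
  have psi_alt: "psi k = (\<lambda>a. (1 / phi d n (SS k) a) * phi d n (CC k) a)"
    unfolding psi_def by auto
  have symL_psi: "symL ?R (\<lambda>a. G a * psi k a) a = (1 / phi d n (SS k) a) * symL ?R (\<lambda>a. G a * phi d n (CC k) a) a"
    if a: "a \<in> cfgs d" for G a
  proof -
    have "(\<lambda>a. G a * psi k a) = (\<lambda>a. (1 / phi d n (SS k) a) * (G a * phi d n (CC k) a))"
      unfolding psi_def by auto
    then show ?thesis using symL_mult[OF Rsub inv_ofS[OF depInvS]] a by simp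
  qed
  show ?case
  proof (intro allI impI)
    fix i g assume i: "i < Suc k" and dg: "dep d (CC i) g"
    show "(\<Sum>a\<in>cfgs d. g a * PP (Suc k) a) = (\<Sum>a\<in>cfgs d. g a * phi d n (CC i) a)"
    proof (cases "i < k")
      case True
      have dF: "dep d (UU k) (\<lambda>a. g a * PP k a)"
        by (rule dep_op[OF dep_mono[OF dg CC_UU[OF True]] dep_PP]) (use k in auto)
      have "(\<Sum>a\<in>cfgs d. g a * PP (Suc k) a) = (\<Sum>a\<in>cfgs d. (g a * PP k a) * psi k a)"
        by (simp add: PPs ac_simps)
      also have "\<dots> = (\<Sum>a\<in>cfgs d. (g a * PP k a) * symL ?R (psi k) a)"
        using sum_symL[OF Rsub inv_of[OF dF], of "psi k"] by simp
      also have "\<dots> = (\<Sum>a\<in>cfgs d. (g a * PP k a))"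
      proof (intro sum.cong refl)
        fix a assume a: "a \<in> cfgs d"
        have "symL ?R (psi k) a = symL ?R (\<lambda>a. 1 * psi k a) a" by simp
        also have "\<dots> = 1"
          using symL_psi[OF a, of "\<lambda>_. 1"] phiS_eq[OF k a] phiS_pos[OF k a] by simp
        finally show "g a * PP k a * symL ?R (psi k) a = g a * PP k a" by simp
      qed
      also have "\<dots> = (\<Sum>a\<in>cfgs d. g a * phi d n (CC i) a)" using IH True dg by blast
      finally show ?thesis .
    next
      case False
      then have ik: "i = k" using i by simp
      have dgC: "dep d (CC k) g" using dg ik by simp
      define h where "h a = (1 / phi d n (SS k) a) * symL ?R (\<lambda>a. g a * phi d n (CC k) a) a" for a
      have dh: "dep d (SS k) h"
        unfolding h_def
        by (rule dep_op[OF depInvS])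
           (use dep_symL[OF Rsub dep_op[OF dgC dep_phi[of d "CC k" n], of "(*)"]] CC_RL[OF k] in simp)
      have "(\<Sum>a\<in>cfgs d. g a * PP (Suc k) a) = (\<Sum>a\<in>cfgs d. PP k a * (g a * psi k a))"
        by (simp add: PPs ac_simps)
      also have "\<dots> = (\<Sum>a\<in>cfgs d. PP k a * symL ?R (\<lambda>a. g a * psi k a) a)"
        using sum_symL[OF Rsub inv_of[OF dPk], of "\<lambda>a. g a * psi k a"] by simp
      also have "\<dots> = (\<Sum>a\<in>cfgs d. PP k a * h a)"
        by (intro sum.cong refl) (simp add: symL_psi h_def)
      also have "\<dots> = (\<Sum>a\<in>cfgs d. phi d n (SS k) a * h a)"
      proof (cases "k = 0")
        case True
        then show ?thesis by (simp add: PP_def SS_0 phi_empty)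
      next
        case False
        then obtain i0 where i0: "i0 < k" "SS k \<subseteq> CC i0" using sep k by blast
        have "(\<Sum>a\<in>cfgs d. PP k a * h a) = (\<Sum>a\<in>cfgs d. h a * phi d n (CC i0) a)"
          using IH i0(1) dep_mono[OF dh i0(2)] by (simp add: mult.commute)
        also have "\<dots> = (\<Sum>a\<in>cfgs d. h a * symL (sorted_list_of_set (CC i0 - SS k)) (phi d n (CC i0)) a)"
        proof -
          have i0l: "i0 < length cs" using i0 k by simp
          have T: "set (sorted_list_of_set (CC i0 - SS k)) = CC i0 - SS k" using CC_fin[OF i0l] by simp
          have Tsub: "set (sorted_list_of_set (CC i0 - SS k)) \<subseteq> {..<d}" using T CC_sub[OF i0l] by auto
          have inv: "\<forall>i\<in>set (sorted_list_of_set (CC i0 - SS k)). \<forall>a\<in>cfgs d. h (flip i a) = h a"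
            using dep_flip[OF dh] T Tsub by auto
          show ?thesis using sum_symL[OF Tsub inv, of "phi d n (CC i0)"] by simp
        qed
        also have "\<dots> = (\<Sum>a\<in>cfgs d. h a * phi d n (SS k) a)"
        proof (intro sum.cong refl)
          fix a assume a: "a \<in> cfgs d"
          have i0l: "i0 < length cs" using i0 k by simp
          have T: "set (sorted_list_of_set (CC i0 - SS k)) = CC i0 - SS k" using CC_fin[OF i0l] by simp
          have Tsub: "set (sorted_list_of_set (CC i0 - SS k)) \<subseteq> {..<d}" using T CC_sub[OF i0l] by auto
          have "CC i0 - set (sorted_list_of_set (CC i0 - SS k)) = SS k" using T i0(2) by auto
          then show "h a * symL (sorted_list_of_set (CC i0 - SS k)) (phi d n (CC i0)) a = h a * phi d n (SS k) a"
            using symL_phi[OF Tsub CC_fin[OF i0l], of n] a by simp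
        qed
        finally show ?thesis by (simp add: mult.commute)
      qed
      also have "\<dots> = (\<Sum>a\<in>cfgs d. 1 * symL ?R (\<lambda>a. g a * phi d n (CC k) a) a)"
      proof (intro sum.cong refl)
        fix a assume a: "a \<in> cfgs d"
        have "phi d n (SS k) a \<noteq> 0" using phiS_pos[OF k a] by simp
        then show "phi d n (SS k) a * h a = 1 * symL ?R (\<lambda>a. g a * phi d n (CC k) a) a"
          unfolding h_def by simp
      qed
      also have "\<dots> = (\<Sum>a\<in>cfgs d. 1 * (g a * phi d n (CC k) a))"
        by (rule sum_symL[OF Rsub]) simp
      finally show ?thesis using ik by simp
    qed
  qed
qed

end



lemma chib_flip:
  assumes "a \<in> cfgs d" "b \<in> cfgs d" "i < d" "b i = 1"
  shows "chib d b (flip i a) = - chib d b a"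
  using dotp_flip[OF assms(2,1,3)] assms(4) unfolding chib_def by (simp add: dotp_comm)

lemma zero_by_flip:
  assumes b: "b \<in> cfgs d" and i: "i < d" "b i = 1" and dh: "dep d K h" and iK: "i \<notin> K"
  shows "(\<Sum>a\<in>cfgs d. chib d b a * h a) = 0"
proof -
  let ?S = "\<Sum>a\<in>cfgs d. chib d b a * h a"
  have "?S = (\<Sum>a\<in>cfgs d. chib d b (flip i a) * h (flip i a))"
    using sum_flip[OF i(1), of "\<lambda>a. chib d b a * h a"] by simp
  also have "\<dots> = (\<Sum>a\<in>cfgs d. - (chib d b a * h a))"
    by (intro sum.cong refl) (simp add: chib_flip[OF _ b i] dep_flip[OF dh _ i(1) iK])
  finally show ?thesis by (simp add: sum_negf)
qed

context pseq2 begin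

abbreviation "mm \<equiv> mle_formula d n cs"

lemma mle_eq:
  assumes a: "a \<in> cfgs d"
  shows "mm a = PP (length cs) a / 2 ^ d"
proof -
  have "mm a = (\<Prod>j<length cs. psi j a * (2 ^ card (SS j) / 2 ^ card (CC j)))"
    unfolding mle_formula_def
    by (intro prod.cong refl) (simp add: smh_phi psi_def CC_def[symmetric] UU_def[symmetric] SS_def[symmetric])
  also have "\<dots> = PP (length cs) a * (\<Prod>j<length cs. (2::real) ^ card (SS j) / 2 ^ card (CC j))"
    unfolding PP_def prod.distrib ..
  also have "\<dots> = PP (length cs) a / 2 ^ d"
    using card_telescope[of "length cs"] cover by simp
  finally show ?thesis .
qed

lemma PP_pos: "a \<in> cfgs d \<Longrightarrow> k \<le> length cs \<Longrightarrow> 0 < PP k a"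
  unfolding PP_def psi_def
  by (intro prod_pos ballI divide_pos_pos phiC_pos phiS_pos) auto

lemma mm_pos: "a \<in> cfgs d \<Longrightarrow> 0 < mm a"
  using mle_eq PP_pos by simp

lemma sum_mm: "(\<Sum>a\<in>cfgs d. mm a) = 1"
proof -
  have "(\<Sum>a\<in>cfgs d. mm a) = (\<Sum>a\<in>cfgs d. 1 * PP (length cs) a) / 2 ^ d"
    by (simp add: mle_eq sum_divide_distrib)
  also have "(\<Sum>a\<in>cfgs d. 1 * PP (length cs) a) = (\<Sum>a\<in>cfgs d. 1 * phi d n (CC 0) a)"
  proof -
    have "0 < length cs" using cs_ne by simp
    then show ?thesis using invariant[of "length cs"] dep_const[of d "CC 0" 1] by blast
  qed
  also have "\<dots> = 2 ^ d"
    using sum_phi[of "CC 0" d n] CC_sub[of 0] CC_fin[of 0] cs_ne by (auto simp: atLeast0LessThan)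
  finally show ?thesis by simp
qed

lemma mom_mm:
  assumes "s < d" "t < d" "s < t" "{s,t} \<in> E"
  shows "(\<Sum>a\<in>cfgs d. mm a * chi s t a) = xi_hat d n s t"
proof -
  have "s \<noteq> t" using assms by simp
  then obtain C where C: "C \<in> set cs" "s \<in> C" "t \<in> C" using edge_clique[of s t] assms by blast
  then obtain i where i: "i < length cs" "CC i = C" unfolding CC_def in_set_conv_nth by blast
  have "(\<Sum>a\<in>cfgs d. mm a * chi s t a) = (\<Sum>a\<in>cfgs d. chi s t a * PP (length cs) a) / 2 ^ d"
    by (simp add: mle_eq sum_divide_distrib ac_simps)
  also have "(\<Sum>a\<in>cfgs d. chi s t a * PP (length cs) a) = (\<Sum>a\<in>cfgs d. chi s t a * phi d n C a)"
    using invariant[of "length cs"] i dep_chi[OF C(2,3), of d] by blast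
  also have "\<dots> = 2 ^ d * xi_hat d n s t"
    using sum_chi_phi[of C d s t n] clique_props[OF C(1)] C assms by (auto simp: atLeast0LessThan)
  finally show ?thesis by simp
qed

lemma mom_mm':
  assumes "s < d" "t < d" "s \<noteq> t" "{s,t} \<in> E"
  shows "(\<Sum>a\<in>cfgs d. mm a * chi s t a) = xi_hat d n s t"
proof (cases "s < t")
  case True then show ?thesis using mom_mm assms by blast
next
  case False
  then have "t < s" using assms by simp
  moreover have "{t,s} \<in> E" using assms by (simp add: insert_commute)
  ultimately have "(\<Sum>a\<in>cfgs d. mm a * chi t s a) = xi_hat d n t s" using mom_mm[of t s] assms by blast
  then show ?thesis by (simp add: chi_comm[of s t] xi_comm[of d n s t])
qed

lemma phi_compl: "K \<subseteq> {0..<d} \<Longrightarrow> a \<in> cfgs d \<Longrightarrow> phi d n K (compl_cfg d a) = phi d n K a"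
  unfolding phi_def by (intro arg_cong[where f="\<lambda>x. 1 + x"] sum.cong refl) (auto simp: chi_compl subset_eq)

lemma SS_sub0: "j < length cs \<Longrightarrow> SS j \<subseteq> {0..<d}"
  using SS_sub CC_sub by blast

lemma mm_pal: "a \<in> cfgs d \<Longrightarrow> mm (compl_cfg d a) = mm a"
  unfolding mle_formula_def smh_phi CC_def[symmetric] UU_def[symmetric] SS_def[symmetric]
  by (intro prod.cong refl) (simp add: phi_compl CC_sub SS_sub0)

definition hh :: "nat \<Rightarrow> (nat \<Rightarrow> nat) \<Rightarrow> real" where
  "hh j a = ln (sym_marg_hat d n (CC j) a) - ln (sym_marg_hat d n (SS j) a)"

lemma dep_hh: "dep d (CC j) (hh j)"
  unfolding hh_def smh_phi
  by (rule dep_op[OF dep_op[OF dep_phi dep_const] dep_mono[OF dep_op[OF dep_phi dep_const] SS_sub]])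

lemma ln_mm: "a \<in> cfgs d \<Longrightarrow> ln (mm a) = (\<Sum>j<length cs. hh j a)"
proof -
  assume a: "a \<in> cfgs d"
  have p1: "0 < sym_marg_hat d n (CC j) a" and p2: "0 < sym_marg_hat d n (SS j) a" if "j < length cs" for j
    using phiC_pos[OF that a] phiS_pos[OF that a] by (simp_all add: smh_phi)
  have "ln (mm a) = ln (\<Prod>j<length cs. sym_marg_hat d n (CC j) a / sym_marg_hat d n (SS j) a)"
    unfolding mle_formula_def CC_def[symmetric] UU_def[symmetric] SS_def[symmetric] ..
  also have "\<dots> = (\<Sum>j<length cs. ln (sym_marg_hat d n (CC j) a / sym_marg_hat d n (SS j) a))"
    by (rule ln_prod) (use p1 p2 in \<open>fastforce\<close>)+
  also have "\<dots> = (\<Sum>j<length cs. hh j a)"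
  proof (intro sum.cong refl)
    fix j assume "j \<in> {..<length cs}"
    then have "0 < sym_marg_hat d n (CC j) a" "0 < sym_marg_hat d n (SS j) a" using p1 p2 by auto
    then show "ln (sym_marg_hat d n (CC j) a / sym_marg_hat d n (SS j) a) = hh j a"
      unfolding hh_def by (rule ln_divide_pos)
  qed
  finally show ?thesis .
qed

lemma loglin_mm_dep:
  assumes b: "b \<in> cfgs d" and nd: "\<forall>j<length cs. \<exists>i<d. b i = 1 \<and> i \<notin> CC j"
  shows "loglin_int d mm b = 0"
proof -
  have "(\<Sum>a\<in>cfgs d. chib d b a * ln (mm a)) = (\<Sum>a\<in>cfgs d. \<Sum>j<length cs. chib d b a * hh j a)"
    by (intro sum.cong refl) (simp add: ln_mm sum_distrib_left)
  also have "\<dots> = (\<Sum>j<length cs. \<Sum>a\<in>cfgs d. chib d b a * hh j a)" by (rule sum.swap)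
  also have "\<dots> = 0"
  proof (rule sum.neutral, intro ballI)
    fix j assume "j \<in> {..<length cs}"
    then obtain i where "i < d" "b i = 1" "i \<notin> CC j" using nd by auto
    then show "(\<Sum>a\<in>cfgs d. chib d b a * hh j a) = 0" using zero_by_flip[OF b _ _ dep_hh] by blast
  qed
  finally show ?thesis unfolding loglin_chib by simp
qed

lemma mm_model: "mm \<in> palindromic_ising d E"
  unfolding palindromic_ising_def
proof (intro CollectI conjI ballI allI impI)
  show "\<And>a. a \<in> cfgs d \<Longrightarrow> 0 < mm a" by (rule mm_pos)
  show "(\<Sum>a\<in>cfgs d. mm a) = 1" by (rule sum_mm)
  show "\<And>a. a \<in> cfgs d \<Longrightarrow> mm (compl_cfg d a) = mm a" by (rule mm_pal)
  fix b assume b: "b \<in> cfgs d" and w: "3 \<le> wt d b"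
  show "loglin_int d mm b = 0"
  proof (cases "odd (wt d b)")
    case True then show ?thesis using odd_loglin[of d mm b] mm_pal b by blast
  next
    case False
    then have w4: "4 \<le> wt d b" using w by (cases "wt d b = 3") auto
    show ?thesis
    proof (rule loglin_mm_dep[OF b], intro allI impI)
      fix j assume j: "j < length cs"
      have "card (CC j) \<le> 3" using clique_props(3)[OF CC_in[OF j]] .
      have "\<not> {i\<in>{..<d}. b i = 1} \<subseteq> CC j"
      proof
        assume "{i\<in>{..<d}. b i = 1} \<subseteq> CC j"
        then have "card {i\<in>{..<d}. b i = 1} \<le> card (CC j)" using card_mono[OF CC_fin[OF j]] by blast
        then show False using w4 wt_card[OF b] \<open>card (CC j) \<le> 3\<close> by linarith
      qed
      then show "\<exists>i<d. b i = 1 \<and> i \<notin> CC j" by auto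
    qed
  qed
next
  fix s t assume st: "s < d" "t < d" "s \<noteq> t \<and> {s, t} \<notin> E"
  show "loglin_int d mm (pair_vec d s t) = 0"
  proof (rule loglin_mm_dep[OF pair_vec_cfgs], intro allI impI)
    fix j assume j: "j < length cs"
    have "\<not> (s \<in> CC j \<and> t \<in> CC j)" using clique_props(4)[OF CC_in[OF j], of s t] st by blast
    then show "\<exists>i<d. pair_vec d s t i = 1 \<and> i \<notin> CC j"
      using st unfolding pair_vec_def by auto
  qed
qed

end



lemma model_inner:
  assumes p: "p \<in> palindromic_ising d E"
    and s1: "(\<Sum>a\<in>cfgs d. w1 a) = (\<Sum>a\<in>cfgs d. w2 a)"
    and mo: "\<And>s t. s < d \<Longrightarrow> t < d \<Longrightarrow> s \<noteq> t \<Longrightarrow> {s,t} \<in> E \<Longrightarrow>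
       (\<Sum>a\<in>cfgs d. w1 a * chi s t a) = (\<Sum>a\<in>cfgs d. w2 a * chi s t a)"
  shows "(\<Sum>a\<in>cfgs d. w1 a * ln (p a)) = (\<Sum>a\<in>cfgs d. w2 a * ln (p a))"
proof -
  have pal: "\<forall>a\<in>cfgs d. p (compl_cfg d a) = p a"
    and hi: "\<forall>b\<in>cfgs d. 3 \<le> wt d b \<longrightarrow> loglin_int d p b = 0"
    and ne: "\<forall>s<d. \<forall>t<d. s \<noteq> t \<and> {s, t} \<notin> E \<longrightarrow> loglin_int d p (pair_vec d s t) = 0"
    using p unfolding palindromic_ising_def by auto
  have expand: "(\<Sum>a\<in>cfgs d. w a * ln (p a)) =
      (\<Sum>b\<in>cfgs d. loglin_int d p b * (\<Sum>a\<in>cfgs d. w a * chib d b a))" for w :: "(nat \<Rightarrow> nat) \<Rightarrow> real"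
  proof -
    have "(\<Sum>a\<in>cfgs d. w a * ln (p a)) = (\<Sum>a\<in>cfgs d. \<Sum>b\<in>cfgs d. w a * (loglin_int d p b * chib d b a))"
    proof (intro sum.cong refl)
      fix a assume a: "a \<in> cfgs d"
      show "w a * ln (p a) = (\<Sum>b\<in>cfgs d. w a * (loglin_int d p b * chib d b a))"
        unfolding sum_distrib_left[symmetric] inversion[OF a] ..
    qed
    also have "\<dots> = (\<Sum>b\<in>cfgs d. loglin_int d p b * (\<Sum>a\<in>cfgs d. w a * chib d b a))"
      by (subst sum.swap) (simp add: sum_distrib_left ac_simps)
    finally show ?thesis .
  qed
  have tm: "loglin_int d p b * (\<Sum>a\<in>cfgs d. w1 a * chib d b a) = loglin_int d p b * (\<Sum>a\<in>cfgs d. w2 a * chib d b a)"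
    if b: "b \<in> cfgs d" for b
  proof -
    consider "wt d b = 0" | "wt d b = 1" | "wt d b = 2" | "3 \<le> wt d b" by linarith
    then show ?thesis
    proof cases
      case 1
      then have "chib d b a = 1" for a using wt0_dotp[OF b] unfolding chib_def by simp
      then show ?thesis using s1 by simp
    next
      case 2
      then have "loglin_int d p b = 0" using odd_loglin[OF pal b] by simp
      then show ?thesis by simp
    next
      case 3
      then obtain s t where st: "s < d" "t < d" "s \<noteq> t" "b = pair_vec d s t" using wt2_pair[OF b] by blast
      show ?thesis
      proof (cases "{s,t} \<in> E")
        case True
        have "chib d b a = chi s t a" for a using chib_pair[OF st(1-3)] st(4) unfolding chi_def by simp
        then show ?thesis using mo[OF st(1-3) True] by simp
      next
        case False
        then show ?thesis using ne st by simp
      qed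
    next
      case 4
      then show ?thesis using hi b by simp
    qed
  qed
  show ?thesis unfolding expand by (intro sum.cong refl tm)
qed

lemma ln_lt:
  fixes x :: real
  assumes "0 < x" "x \<noteq> 1"
  shows "ln x < x - 1"
proof -
  have sx: "0 < sqrt x" using assms by simp
  have "ln x = 2 * ln (sqrt x)"
    using assms by (simp add: ln_sqrt)
  also have "\<dots> \<le> 2 * (sqrt x - 1)" using ln_le_minus_one[OF sx] by simp
  also have "\<dots> < x - 1"
  proof -
    have "sqrt x \<noteq> 1" using assms by auto
    then have "0 < (sqrt x - 1)^2" by simp
    moreover have "(sqrt x)^2 = x" using assms by simp
    ultimately show ?thesis by (simp add: power2_eq_square algebra_simps)
  qed
  finally show ?thesis .
qed

lemma gibbs:
  assumes fin: "finite A" and mp: "\<forall>a\<in>A. 0 < m a" and pp: "\<forall>a\<in>A. 0 < p a"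
    and sm: "(\<Sum>a\<in>A. m a) = 1" and sp: "(\<Sum>a\<in>A. p a) = 1"
  shows "(\<Sum>a\<in>A. m a * ln (p a)) \<le> (\<Sum>a\<in>A. m a * ln (m a))"
    and "(\<Sum>a\<in>A. m a * ln (p a)) = (\<Sum>a\<in>A. m a * ln (m a)) \<Longrightarrow> \<forall>a\<in>A. p a = (m a :: real)"
proof -
  have diff: "(\<Sum>a\<in>A. m a * ln (p a)) - (\<Sum>a\<in>A. m a * ln (m a)) = (\<Sum>a\<in>A. m a * ln (p a / m a))"
    by (simp add: sum_subtractf[symmetric] ln_divide_pos mp pp right_diff_distrib)
  have le: "m a * ln (p a / m a) \<le> p a - m a" if a: "a \<in> A" for a
  proof -
    have "m a * ln (p a / m a) \<le> m a * (p a / m a - 1)"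
      using ln_le_minus_one[of "p a / m a"] mp pp a by (intro mult_left_mono) auto
    also have "\<dots> = p a - m a"
    proof -
      have "m a \<noteq> 0" using mp a by auto
      then show ?thesis by (simp add: field_simps)
    qed
    finally show ?thesis .
  qed
  have "(\<Sum>a\<in>A. m a * ln (p a / m a)) \<le> (\<Sum>a\<in>A. p a - m a)" by (rule sum_mono) (rule le)
  also have "\<dots> = 0" using sm sp by (simp add: sum_subtractf)
  finally show "(\<Sum>a\<in>A. m a * ln (p a)) \<le> (\<Sum>a\<in>A. m a * ln (m a))" using diff by simp
  assume eq: "(\<Sum>a\<in>A. m a * ln (p a)) = (\<Sum>a\<in>A. m a * ln (m a))"
  show "\<forall>a\<in>A. p a = m a"
  proof (rule ccontr)
    assume "\<not> (\<forall>a\<in>A. p a = m a)"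
    then obtain a0 where a0: "a0 \<in> A" "p a0 \<noteq> m a0" by blast
    have lt: "m a0 * ln (p a0 / m a0) < p a0 - m a0"
    proof -
      have "p a0 / m a0 \<noteq> 1" using a0 mp by auto
      then have "m a0 * ln (p a0 / m a0) < m a0 * (p a0 / m a0 - 1)"
        using ln_lt[of "p a0 / m a0"] mp pp a0 by (intro mult_strict_left_mono) auto
      also have "\<dots> = p a0 - m a0"
      proof -
        have "m a0 \<noteq> 0" using mp a0 by auto
        then show ?thesis by (simp add: field_simps)
      qed
      finally show ?thesis .
    qed
    have "(\<Sum>a\<in>A. m a * ln (p a / m a)) < (\<Sum>a\<in>A. p a - m a)"
      by (rule sum_strict_mono_ex1[OF fin]) (use le a0 lt in auto)
    also have "\<dots> = 0" using sm sp by (simp add: sum_subtractf)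
    finally show False using diff eq by simp
  qed
qed

context pseq2 begin

lemma loglik_eq:
  assumes N: "0 < sample_size d n" and p: "p \<in> palindromic_ising d E"
  shows "loglik d n p = real (sample_size d n) * (\<Sum>a\<in>cfgs d. mm a * ln (p a))"
proof -
  let ?N = "real (sample_size d n)"
  have "loglik d n p = ?N * (\<Sum>a\<in>cfgs d. (real (n a) / ?N) * ln (p a))"
    unfolding loglik_def sum_distrib_left
  proof (intro sum.cong refl)
    fix a have "?N \<noteq> 0" using N by simp
    have g: "\<And>M x y::real. M \<noteq> 0 \<Longrightarrow> M * (x / M * y) = x * y" by (simp add: field_simps)
    then show "real (n a) * ln (p a) = ?N * (real (n a) / ?N * ln (p a))" using \<open>?N \<noteq> 0\<close> by metis
  qed
  also have "(\<Sum>a\<in>cfgs d. (real (n a) / ?N) * ln (p a)) = (\<Sum>a\<in>cfgs d. mm a * ln (p a))"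
  proof (rule model_inner[OF p])
    show "(\<Sum>a\<in>cfgs d. real (n a) / ?N) = (\<Sum>a\<in>cfgs d. mm a)"
    proof -
      have e: "(\<Sum>a\<in>cfgs d. real (n a)) = ?N" unfolding sample_size_def by (simp add: of_nat_sum)
      have "?N \<noteq> 0" using N by simp
      then show ?thesis unfolding sum_mm sum_divide_distrib[symmetric] e by simp
    qed
    fix s t assume st: "s < d" "t < d" "s \<noteq> t" "{s,t} \<in> E"
    show "(\<Sum>a\<in>cfgs d. real (n a) / ?N * chi s t a) = (\<Sum>a\<in>cfgs d. mm a * chi s t a)"
    proof -
      have "(\<Sum>a\<in>cfgs d. real (n a) / ?N * chi s t a) = xi_hat d n s t"
        unfolding xi_hat_def chi_def sum_divide_distrib by (intro sum.cong refl) simp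
      then show ?thesis using mom_mm'[OF st] by simp
    qed
  qed
  finally show ?thesis .
qed

lemma part2:
  assumes N: "0 < sample_size d n"
  shows "mm \<in> palindromic_ising d E \<and> (\<forall>p\<in>palindromic_ising d E. loglik d n p \<le> loglik d n mm)"
proof (intro conjI ballI mm_model)
  fix p assume p: "p \<in> palindromic_ising d E"
  have pp: "\<forall>a\<in>cfgs d. 0 < p a" "(\<Sum>a\<in>cfgs d. p a) = 1" using p unfolding palindromic_ising_def by auto
  have "(\<Sum>a\<in>cfgs d. mm a * ln (p a)) \<le> (\<Sum>a\<in>cfgs d. mm a * ln (mm a))"
    using gibbs(1)[OF cfgs_fin _ pp(1) sum_mm pp(2)] mm_pos by blast
  then show "loglik d n p \<le> loglik d n mm"
    unfolding loglik_eq[OF N p] loglik_eq[OF N mm_model] by (rule mult_left_mono) simp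
qed

lemma part1_eq:
  assumes N: "0 < sample_size d n" and q: "q \<in> palindromic_ising d E"
    and mx: "loglik d n mm \<le> loglik d n q"
  shows "\<forall>a\<in>cfgs d. q a = mm a"
proof -
  have qq: "\<forall>a\<in>cfgs d. 0 < q a" "(\<Sum>a\<in>cfgs d. q a) = 1" using q unfolding palindromic_ising_def by auto
  have le: "(\<Sum>a\<in>cfgs d. mm a * ln (q a)) \<le> (\<Sum>a\<in>cfgs d. mm a * ln (mm a))"
    using gibbs(1)[OF cfgs_fin _ qq(1) sum_mm qq(2)] mm_pos by blast
  have "(\<Sum>a\<in>cfgs d. mm a * ln (mm a)) \<le> (\<Sum>a\<in>cfgs d. mm a * ln (q a))"
    using mx loglik_eq[OF N q] loglik_eq[OF N mm_model] N by simp
  then have "(\<Sum>a\<in>cfgs d. mm a * ln (q a)) = (\<Sum>a\<in>cfgs d. mm a * ln (mm a))" using le by simp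
  then show ?thesis using gibbs(2)[OF cfgs_fin _ qq(1) sum_mm qq(2)] mm_pos by blast
qed

end



lemma chib_orth2:
  assumes "b \<in> cfgs d" "c \<in> cfgs d"
  shows "(\<Sum>a\<in>cfgs d. chib d b a * chib d c a) = (if b = c then 2 ^ d else 0)"
proof -
  have "(\<Sum>a\<in>cfgs d. chib d b a * chib d c a) = (\<Sum>a\<in>cfgs d. chib d a b * chib d a c)"
    unfolding chib_def by (simp add: dotp_comm)
  then show ?thesis using orth[OF assms] by simp
qed

definition zv :: "nat \<Rightarrow> nat \<Rightarrow> nat" where "zv d = (\<lambda>i\<in>{0..<d}. 0)"

lemma zv_cfgs: "zv d \<in> cfgs d" unfolding zv_def cfgs_def by auto

lemma zv_wt: "wt d (zv d) = 0" unfolding wt_def zv_def by simp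

lemma chib_zv: "chib d (zv d) a = 1" unfolding chib_def dotp_def zv_def by simp

lemma sum_chib0:
  assumes b: "b \<in> cfgs d" "0 < wt d b"
  shows "(\<Sum>a\<in>cfgs d. chib d b a) = 0"
proof -
  have "b \<noteq> zv d" using zv_wt b by auto
  then show ?thesis using chib_orth2[OF b(1) zv_cfgs] by (simp add: chib_zv)
qed

lemma sum_chib_chi:
  assumes b: "b \<in> cfgs d" and st: "s < d" "t < d" "s \<noteq> t" and ne: "b \<noteq> pair_vec d s t"
  shows "(\<Sum>a\<in>cfgs d. chib d b a * chi s t a) = 0"
proof -
  have "(\<Sum>a\<in>cfgs d. chib d b a * chi s t a) = (\<Sum>a\<in>cfgs d. chib d b a * chib d (pair_vec d s t) a)"
    using chib_pair[OF st] unfolding chi_def by simp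
  then show ?thesis using chib_orth2[OF b pair_vec_cfgs] ne by simp
qed

lemma pair_vec_inj:
  assumes "u < d" "v < d" "u \<noteq> v" "s < d" "t < d" "s \<noteq> t" "pair_vec d u v = pair_vec d s t"
  shows "{u,v} = {s,t}"
proof -
  have "\<forall>i<d. (i = u \<or> i = v) \<longleftrightarrow> (i = s \<or> i = t)"
  proof (intro allI impI)
    fix i assume "i < d"
    then have "pair_vec d u v i = pair_vec d s t i" using assms by simp
    then show "(i = u \<or> i = v) \<longleftrightarrow> (i = s \<or> i = t)" using \<open>i < d\<close> unfolding pair_vec_def by (auto split: if_splits)
  qed
  then show ?thesis using assms by blast
qed

lemma foc:
  assumes N: "0 < sample_size d n" and q: "q \<in> palindromic_ising d E"
    and mx: "\<forall>p\<in>palindromic_ising d E. loglik d n p \<le> loglik d n q"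
    and st: "s < d" "t < d" "s \<noteq> t" "{s,t} \<in> E"
  shows "(\<Sum>a\<in>cfgs d. q a * chi s t a) = xi_hat d n s t"
proof -
  have qpos: "\<forall>a\<in>cfgs d. 0 < q a" and qs: "(\<Sum>a\<in>cfgs d. q a) = 1"
    and qpal: "\<forall>a\<in>cfgs d. q (compl_cfg d a) = q a"
    and qhi: "\<forall>b\<in>cfgs d. 3 \<le> wt d b \<longrightarrow> loglin_int d q b = 0"
    and qne: "\<forall>u<d. \<forall>v<d. u \<noteq> v \<and> {u, v} \<notin> E \<longrightarrow> loglin_int d q (pair_vec d u v) = 0"
    using q unfolding palindromic_ising_def by auto
  have cne: "cfgs d \<noteq> {}" using cfgs_card[of d] by auto
  define Z where "Z \<tau> = (\<Sum>a\<in>cfgs d. q a * exp (\<tau> * chi s t a))" for \<tau>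
  define pt where "pt \<tau> a = q a * exp (\<tau> * chi s t a) / Z \<tau>" for \<tau> a
  have Zpos: "0 < Z \<tau>" for \<tau>
    unfolding Z_def using qpos cne cfgs_fin by (intro sum_pos) auto
  have Z0: "Z 0 = 1" unfolding Z_def using qs by simp
  have lnpt: "ln (pt \<tau> a) = ln (q a) + \<tau> * chi s t a - ln (Z \<tau>)" if a: "a \<in> cfgs d" for \<tau> a
  proof -
    have "0 < q a" using qpos a by auto
    then have "ln (q a * exp (\<tau> * chi s t a) / Z \<tau>) = ln (q a * exp (\<tau> * chi s t a)) - ln (Z \<tau>)"
      using Zpos[of \<tau>] by (intro ln_divide_pos) auto
    also have "\<dots> = ln (q a) + \<tau> * chi s t a - ln (Z \<tau>)"
      using \<open>0 < q a\<close> by (simp add: ln_mult)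
    finally show ?thesis unfolding pt_def .
  qed
  have key: "loglin_int d (pt \<tau>) b = loglin_int d q b"
    if b: "b \<in> cfgs d" "0 < wt d b" "b \<noteq> pair_vec d s t" for b \<tau>
  proof -
    have "(\<Sum>a\<in>cfgs d. chib d b a * ln (pt \<tau> a))
        = (\<Sum>a\<in>cfgs d. chib d b a * ln (q a)) + \<tau> * (\<Sum>a\<in>cfgs d. chib d b a * chi s t a)
          - ln (Z \<tau>) * (\<Sum>a\<in>cfgs d. chib d b a)"
      by (simp add: lnpt sum_distrib_left sum.distrib sum_subtractf algebra_simps)
    also have "\<dots> = (\<Sum>a\<in>cfgs d. chib d b a * ln (q a))"
      using sum_chib0[OF b(1,2)] sum_chib_chi[OF b(1) st(1-3) b(3)] by simp
    finally show ?thesis unfolding loglin_chib by simp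
  qed
  have pt_model: "pt \<tau> \<in> palindromic_ising d E" for \<tau>
    unfolding palindromic_ising_def
  proof (intro CollectI conjI ballI allI impI)
    show "\<And>a. a \<in> cfgs d \<Longrightarrow> 0 < pt \<tau> a" unfolding pt_def using qpos Zpos by simp
    show "(\<Sum>a\<in>cfgs d. pt \<tau> a) = 1" unfolding pt_def sum_divide_distrib[symmetric] Z_def[symmetric]
      using Zpos[of \<tau>] by simp
    show "\<And>a. a \<in> cfgs d \<Longrightarrow> pt \<tau> (compl_cfg d a) = pt \<tau> a"
      unfolding pt_def using qpal st by (simp add: chi_compl)
    fix b assume b: "b \<in> cfgs d" "3 \<le> wt d b"
    have "b \<noteq> pair_vec d s t" using b wt_pair[OF st(1-3)] by auto
    then show "loglin_int d (pt \<tau>) b = 0" using key[of b] b qhi by simp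
  next
    fix u v assume uv: "u < d" "v < d" "u \<noteq> v \<and> {u, v} \<notin> E"
    have "pair_vec d u v \<noteq> pair_vec d s t" using pair_vec_inj[of u d v s t] uv st by auto
    then show "loglin_int d (pt \<tau>) (pair_vec d u v) = 0"
      using key[OF pair_vec_cfgs] wt_pair[of u d v] uv qne by simp
  qed
  define X where "X = (\<Sum>a\<in>cfgs d. real (n a) * chi s t a)"
  define Nr where "Nr = real (sample_size d n)"
  define f where "f \<tau> = loglik d n q + \<tau> * X - Nr * ln (Z \<tau>)" for \<tau>
  have fll: "loglik d n (pt \<tau>) = f \<tau>" for \<tau>
  proof -
    have "loglik d n (pt \<tau>) = (\<Sum>a\<in>cfgs d. real (n a) * ln (q a) + \<tau> * (real (n a) * chi s t a) - real (n a) * ln (Z \<tau>))"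
      unfolding loglik_def by (intro sum.cong refl) (simp add: lnpt algebra_simps)
    also have "\<dots> = f \<tau>"
      unfolding f_def loglik_def X_def Nr_def sample_size_def
      by (simp add: sum.distrib sum_subtractf sum_distrib_left sum_distrib_right of_nat_sum)
    finally show ?thesis .
  qed
  have f0: "f 0 = loglik d n q" unfolding f_def Z0 by simp
  define Z' where "Z' = (\<Sum>a\<in>cfgs d. q a * chi s t a)"
  have dZ: "(Z has_field_derivative Z') (at 0)"
  proof -
    have "((\<lambda>\<tau>. \<Sum>a\<in>cfgs d. q a * exp (\<tau> * chi s t a)) has_field_derivative
           (\<Sum>a\<in>cfgs d. q a * (exp (0 * chi s t a) * chi s t a))) (at 0)"
      by (rule DERIV_sum) (auto intro!: derivative_eq_intros)
    then show ?thesis unfolding Z_def[symmetric] Z'_def by simp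
  qed
  have dl: "((\<lambda>\<tau>. ln (Z \<tau>)) has_field_derivative (1 / Z 0) * Z') (at 0)"
    using DERIV_chain'[OF dZ DERIV_ln_divide[OF Zpos[of 0]]] by simp
  have df: "(f has_field_derivative (X - Nr * ((1 / Z 0) * Z'))) (at 0)"
    unfolding f_def[abs_def] by (auto intro!: derivative_eq_intros dZ Zpos)
  have "X - Nr * ((1 / Z 0) * Z') = 0"
  proof (rule DERIV_local_max[OF df zero_less_one], intro allI impI)
    fix y :: real
    show "f y \<le> f 0" using mx pt_model[of y] fll[of y] f0 by auto
  qed
  then have "Z' = X / Nr" using N unfolding Z0 Nr_def by (simp add: field_simps)
  then show ?thesis unfolding Z'_def X_def Nr_def xi_hat_def chi_def
    by (simp add: ac_simps)
qed



lemma pair_sum_nonneg: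
  fixes e :: "nat \<Rightarrow> real"
  assumes fin: "finite C" and c3: "card C \<le> 3" and ev: "\<forall>u\<in>C. e u = 1 \<or> e u = -1"
  shows "0 \<le> 1 + (\<Sum>u\<in>C. \<Sum>v\<in>C. if u < v then e u * e v else 0)"
proof -
  define S where "S = (\<Sum>u\<in>C. \<Sum>v\<in>C. if u < v then e u * e v else 0)"
  have sq: "(\<Sum>u\<in>C. e u)^2 = (\<Sum>u\<in>C. \<Sum>v\<in>C. e u * e v)"
    by (simp add: power2_eq_square sum_product)
  have pt: "e u * e v = (if u < v then e u * e v else 0) + (if v < u then e u * e v else 0)
                        + (if u = v then e u * e v else 0)" for u v
    by auto
  have A: "(\<Sum>u\<in>C. \<Sum>v\<in>C. e u * e v) = S + (\<Sum>u\<in>C. \<Sum>v\<in>C. if v < u then e u * e v else 0)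
       + (\<Sum>u\<in>C. \<Sum>v\<in>C. if u = v then e u * e v else 0)"
    unfolding S_def by (subst pt) (simp add: sum.distrib)
  have B: "(\<Sum>u\<in>C. \<Sum>v\<in>C. if v < u then e u * e v else 0) = S"
    unfolding S_def by (subst sum.swap) (intro sum.cong refl, auto simp: mult.commute)
  have Cd: "(\<Sum>u\<in>C. \<Sum>v\<in>C. if u = v then e u * e v else 0) = real (card C)"
  proof -
    have "(\<Sum>u\<in>C. \<Sum>v\<in>C. if u = v then e u * e v else 0) = (\<Sum>u\<in>C. 1)"
    proof (intro sum.cong refl)
      fix u assume u: "u \<in> C"
      have "(\<Sum>v\<in>C. if u = v then e u * e v else 0) = e u * e u" using fin u by (simp add: sum.delta)
      also have "\<dots> = 1" using ev u by auto
      finally show "(\<Sum>v\<in>C. if u = v then e u * e v else 0) = 1" .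
    qed
    then show ?thesis by simp
  qed
  have main: "(\<Sum>u\<in>C. e u)^2 = 2 * S + real (card C)" using sq A B Cd by simp
  show ?thesis
  proof (cases "card C = 3")
    case False
    then have "card C \<le> 2" using c3 by simp
    moreover have "0 \<le> (\<Sum>u\<in>C. e u)^2" by simp
    ultimately show ?thesis using main unfolding S_def by simp
  next
    case True
    then obtain x y z where C: "C = {x,y,z}" "x \<noteq> y" "y \<noteq> z" "x \<noteq> z" by (auto simp: card_3_iff)
    have "(\<Sum>u\<in>C. e u) = e x + e y + e z" using C by simp
    moreover have "1 \<le> (e x + e y + e z)^2" using ev C by (auto simp: power2_eq_square)
    ultimately show ?thesis using main True unfolding S_def by simp
  qed
qed

context pseq begin

lemma q_clique_pos:
  assumes N: "0 < sample_size d n" and q: "q \<in> palindromic_ising d E"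
    and mx: "\<forall>p\<in>palindromic_ising d E. loglik d n p \<le> loglik d n q"
    and C: "C \<in> set cs" and a0: "a0 \<in> cfgs d"
  shows "0 < sym_marg_hat d n C a0"
proof -
  have qpos: "\<forall>a\<in>cfgs d. 0 < q a" and qs: "(\<Sum>a\<in>cfgs d. q a) = 1"
    using q unfolding palindromic_ising_def by auto
  have Cs: "C \<subseteq> {0..<d}" "finite C" "card C \<le> 3" and Ce: "\<And>s t. s \<in> C \<Longrightarrow> t \<in> C \<Longrightarrow> s \<noteq> t \<Longrightarrow> {s,t} \<in> E"
    using clique_props[OF C] by auto
  define psi where "psi a = 1 + (\<Sum>u\<in>C. \<Sum>v\<in>C. if u < v then chi u v a0 * chi u v a else 0)" for a
  have xi_eq: "xi_hat d n u v = (\<Sum>a\<in>cfgs d. q a * chi u v a)" if "u \<in> C" "v \<in> C" "u < v" for u v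
    using foc[OF N q mx, of u v] that Cs Ce[of u v] by auto
  have "phi d n C a0 = (\<Sum>a\<in>cfgs d. q a) + (\<Sum>u\<in>C. \<Sum>v\<in>C. if u < v then chi u v a0 * (\<Sum>a\<in>cfgs d. q a * chi u v a) else 0)"
    unfolding phi_def qs by (intro arg_cong[where f="\<lambda>x. 1 + x"] sum.cong refl) (simp add: xi_eq)
  also have "\<dots> = (\<Sum>a\<in>cfgs d. q a * psi a)"
  proof -
    have "(\<Sum>a\<in>cfgs d. q a * psi a) = (\<Sum>a\<in>cfgs d. q a) +
       (\<Sum>a\<in>cfgs d. \<Sum>u\<in>C. \<Sum>v\<in>C. if u < v then chi u v a0 * (q a * chi u v a) else 0)"
      unfolding psi_def distrib_left sum.distrib
      by (simp add: sum_distrib_left if_distrib[of "\<lambda>x. q _ * x"] ac_simps cong: if_cong)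
    also have "\<dots> = (\<Sum>a\<in>cfgs d. q a) +
       (\<Sum>u\<in>C. \<Sum>v\<in>C. if u < v then chi u v a0 * (\<Sum>a\<in>cfgs d. q a * chi u v a) else 0)"
      unfolding swap3 sum_if0 by (simp only: sum_distrib_left)
    finally show ?thesis by simp
  qed
  also have "\<dots> > 0"
  proof (rule sum_pos2[OF cfgs_fin a0])
    have "psi a0 = 1 + (\<Sum>u\<in>C. \<Sum>v\<in>C. if u < v then 1 else 0)"
      unfolding psi_def by (intro arg_cong[where f="\<lambda>x. 1 + x"] sum.cong refl) (simp add: chi_sq)
    moreover have "0 \<le> (\<Sum>u\<in>C. \<Sum>v\<in>C. if u < v then 1 else (0::real))" by (intro sum_nonneg) auto
    ultimately have "0 < psi a0" by simp
    then show "0 < q a0 * psi a0" using qpos a0 by simp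
    show "0 \<le> q a * psi a" if a: "a \<in> cfgs d" for a
    proof -
      define e where "e u = (-1::real) ^ (a0 u + a u)" for u
      have m1: "(-1::real)^k = 1 \<or> (-1::real)^k = -1" for k :: nat by (cases "even k") auto
      have ev: "\<forall>u\<in>C. e u = 1 \<or> e u = -1" unfolding e_def using m1 by blast
      have "psi a = 1 + (\<Sum>u\<in>C. \<Sum>v\<in>C. if u < v then e u * e v else 0)"
        unfolding psi_def e_def chi_def
        by (intro arg_cong[where f="\<lambda>x. 1 + x"] sum.cong refl) (simp add: power_add ac_simps)
      then have "0 \<le> psi a" using pair_sum_nonneg[OF Cs(2,3) ev] by simp
      then show "0 \<le> q a * psi a" by (intro mult_nonneg_nonneg) (use qpos a in auto)
    qed
  qed
  finally show ?thesis unfolding smh_phi by simp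
qed

end

theorem proposition5p3:
  fixes d :: nat and E :: "nat set set" and cs :: "nat set list"
    and n :: "(nat \<Rightarrow> nat) \<Rightarrow> nat"
  assumes "is_graph d E"
    and "perfect_clique_seq d E cs"
    and "\<forall>C. is_clique d E C \<longrightarrow> card C \<le> 3"
    and "\<exists>C. is_clique d E C \<and> card C = 3"
    and "0 < sample_size d n"
  shows "(\<forall>q\<in>palindromic_ising d E.
            (\<forall>p\<in>palindromic_ising d E. loglik d n p \<le> loglik d n q) \<longrightarrow>
            (\<forall>a\<in>cfgs d. q a = mle_formula d n cs a))
       \<and> ((\<forall>C\<in>set cs. \<forall>a\<in>cfgs d. 0 < sym_marg_hat d n C a) \<longrightarrow>
            mle_formula d n cs \<in> palindromic_ising d E \<and>
            (\<forall>p\<in>palindromic_ising d E. loglik d n p \<le> loglik d n (mle_formula d n cs)))"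
proof -
  interpret pseq d E cs using assms(1-3) by unfold_locales
  show ?thesis
  proof (rule conjI)
    show "\<forall>q\<in>palindromic_ising d E.
            (\<forall>p\<in>palindromic_ising d E. loglik d n p \<le> loglik d n q) \<longrightarrow>
            (\<forall>a\<in>cfgs d. q a = mle_formula d n cs a)"
    proof (rule ballI, rule impI)
    fix q assume q: "q \<in> palindromic_ising d E"
      and mx: "\<forall>p\<in>palindromic_ising d E. loglik d n p \<le> loglik d n q"
    have posC: "\<forall>C\<in>set cs. \<forall>a\<in>cfgs d. 0 < sym_marg_hat d n C a"
      using q_clique_pos[OF assms(5) q mx] by blast
    interpret pseq2 d E cs n using posC by unfold_locales
    have "loglik d n (mle_formula d n cs) \<le> loglik d n q" using mx mm_model by blast
    then show "\<forall>a\<in>cfgs d. q a = mle_formula d n cs a" using part1_eq[OF assms(5) q] by blast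
    qed
  next
    show "(\<forall>C\<in>set cs. \<forall>a\<in>cfgs d. 0 < sym_marg_hat d n C a) \<longrightarrow>
            mle_formula d n cs \<in> palindromic_ising d E \<and>
            (\<forall>p\<in>palindromic_ising d E. loglik d n p \<le> loglik d n (mle_formula d n cs))"
    proof (rule impI)
    assume posC: "\<forall>C\<in>set cs. \<forall>a\<in>cfgs d. 0 < sym_marg_hat d n C a"
    interpret pseq2 d E cs n using posC by unfold_locales
    show "mle_formula d n cs \<in> palindromic_ising d E \<and> (\<forall>p\<in>palindromic_ising d E. loglik d n p \<le> loglik d n (mle_formula d n cs))"
      using part2[OF assms(5)] by blast
    qed
  qed
qed

end
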